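(* Let $X$ be a compact smooth $n$-dimensional manifold and $P$ an $h$-differential operator on $X$ of the form $\sum_{|\alpha|\le m}a_\alpha(x;h)(hD_x)^\alpha$ in local coordinates, with coefficients uniformly bounded in $C^\infty$, $a_\alpha=a_\alpha^0+\mathcal{O}(h)$ in $C^\infty$, $a_\alpha$ independent of $h$ for $|\alpha|=m$, and classically elliptic: $|\sum_{|\alpha|=m}a_\alpha(x)\xi^\alpha|\ge\frac1C|\xi|^m$. Let $p(x,\xi)=\sum_{|\alpha|\le m}a^0_\alpha(x)\xi^\alpha$, fix $z\in\mathbb{C}$, let $s=|p-z|^2$, and for $0<\alpha\ll 1$ let $\Lambda=\left(\frac{\alpha+s}{1+s}\right)^{1/2}$. Then for every choice of local coordinates $x$ on $X$, with $(x,\xi)$ the corresponding canonical coordinates on $T^*X$, for all $\ell\in\mathbb{R}$ and $\widetilde\alpha,\beta\in\mathbb{N}^n$ we have, uniformly in $\xi$ and in $\alpha$ and locally uniformly in $x$, $$\partial_x^{\widetilde\alpha}\partial_\xi^\beta\Big(1+\frac s\alpha\Big)^\ell=\mathcal{O}(1)\Big(1+\frac s\alpha\Big)^\ell\Lambda^{-|\widetilde\alpha|-|\beta|}\langle\xi\rangle^{-|\beta|}.$$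
   Context: $\langle\xi\rangle=(1+|\xi|^2)^{1/2}$. Note $\sqrt\alpha\le\Lambda\le1$. *)

theory Defs
  imports "HOL-Analysis.Analysis"
begin

definition dir_deriv :: "'a::real_normed_vector \<Rightarrow> ('a \<Rightarrow> 'b::real_normed_vector) \<Rightarrow> 'a \<Rightarrow> 'b" where
  "dir_deriv v f y = vector_derivative (\<lambda>t::real. f (y + t *\<^sub>R v)) (at 0)"

fun iter_deriv :: "'a::real_normed_vector list \<Rightarrow> ('a \<Rightarrow> 'b::real_normed_vector) \<Rightarrow> 'a \<Rightarrow> 'b" where
  "iter_deriv [] f = f"
| "iter_deriv (v # vs) f = dir_deriv v (iter_deriv vs f)"

definition smooth_on :: "'a::real_normed_vector set \<Rightarrow> ('a \<Rightarrow> 'b::real_normed_vector) \<Rightarrow> bool" where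
  "smooth_on U f \<longleftrightarrow> (\<forall>vs. iter_deriv vs f differentiable_on U)"

definition mi_len :: "('n::finite \<Rightarrow> nat) \<Rightarrow> nat" where
  "mi_len \<beta> = (\<Sum>i\<in>UNIV. \<beta> i)"

definition monom :: "real^'n::finite \<Rightarrow> ('n \<Rightarrow> nat) \<Rightarrow> complex" where
  "monom \<xi> \<beta> = (\<Prod>i\<in>UNIV. complex_of_real ((\<xi> $ i) ^ \<beta> i))"

definition symb :: "nat \<Rightarrow> (('n::finite \<Rightarrow> nat) \<Rightarrow> real^'n \<Rightarrow> complex) \<Rightarrow> real^'n \<Rightarrow> real^'n \<Rightarrow> complex" where
  "symb m a x \<xi> = (\<Sum>\<beta>\<in>{\<beta>. mi_len \<beta> \<le> m}. a \<beta> x * monom \<xi> \<beta>)"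

definition princ :: "nat \<Rightarrow> (('n::finite \<Rightarrow> nat) \<Rightarrow> real^'n \<Rightarrow> complex) \<Rightarrow> real^'n \<Rightarrow> real^'n \<Rightarrow> complex" where
  "princ m a x \<xi> = (\<Sum>\<beta>\<in>{\<beta>. mi_len \<beta> = m}. a \<beta> x * monom \<xi> \<beta>)"

definition jbr :: "real^'n::finite \<Rightarrow> real" where
  "jbr \<xi> = sqrt (1 + (norm \<xi>)\<^sup>2)"

text \<open>Coordinate directions on T*U = U x R^n in canonical coordinates (x, xi).\<close>
definition dx :: "'n::finite \<Rightarrow> (real^'n) \<times> (real^'n)" where
  "dx i = (axis i 1, 0)"
definition dxi :: "'n::finite \<Rightarrow> (real^'n) \<times> (real^'n)" where
  "dxi i = (0, axis i 1)"

end

theory Submission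
  imports Defs
begin

section \<open>Generic calculus of iterated directional derivatives\<close>

lemma iter_deriv_append: "iter_deriv (xs @ ys) f = iter_deriv xs (iter_deriv ys f)"
  by (induction xs) auto

lemma line_deriv:
  assumes "(f has_derivative f') (at y)"
  shows "((\<lambda>t::real. f (y + t *\<^sub>R v)) has_vector_derivative f' v) (at 0)"
proof -
  have l: "((\<lambda>t::real. y + t *\<^sub>R v) has_derivative (\<lambda>t. t *\<^sub>R v)) (at 0)"
    by (auto intro!: derivative_eq_intros)
  have f0: "(f has_derivative f') (at (y + 0 *\<^sub>R v))" using assms by simp
  have "((\<lambda>t::real. f (y + t *\<^sub>R v)) has_derivative (\<lambda>t. f' (t *\<^sub>R v))) (at 0)"
    using diff_chain_at[OF l f0] by (simp add: o_def)
  moreover have "(\<lambda>t. f' (t *\<^sub>R v)) = (\<lambda>t. t *\<^sub>R f' v)"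
    using has_derivative_bounded_linear[OF assms] by (simp add: linear_simps)
  ultimately show ?thesis by (simp add: has_vector_derivative_def)
qed

lemma dir_deriv_eq:
  assumes "(f has_derivative f') (at y)"
  shows "dir_deriv v f y = f' v"
  unfolding dir_deriv_def using line_deriv[OF assms] by (rule vector_derivative_at)

lemma dir_deriv_cong:
  assumes "open S" "y \<in> S" "\<And>y. y \<in> S \<Longrightarrow> f y = g y"
  shows "dir_deriv v f y = dir_deriv v g y"
proof -
  define T where "T = {t::real. y + t *\<^sub>R v \<in> S}"
  have "T = (\<lambda>t. y + t *\<^sub>R v) -` S" by (auto simp: T_def)
  moreover have c: "continuous_on UNIV (\<lambda>t::real. y + t *\<^sub>R v)" by (intro continuous_intros)
  ultimately have "open T"
    using open_vimage assms(1) by metis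
  moreover have "0 \<in> T" using assms by (simp add: T_def)
  ultimately have "\<And>d. ((\<lambda>t. f (y + t *\<^sub>R v)) has_vector_derivative d) (at 0) \<longleftrightarrow>
     ((\<lambda>t. g (y + t *\<^sub>R v)) has_vector_derivative d) (at 0)"
    using has_vector_derivative_transform_within_open[of _ _ 0 T] assms(3) unfolding T_def
    by (metis (no_types, lifting) mem_Collect_eq)
  then show ?thesis unfolding dir_deriv_def vector_derivative_def by simp
qed

lemma iter_deriv_cong:
  assumes "open S" "\<And>y. y \<in> S \<Longrightarrow> f y = g y" "y \<in> S"
  shows "iter_deriv vs f y = iter_deriv vs g y"
  using assms(3)
proof (induction vs arbitrary: y)
  case Nil then show ?case using assms by simp
next
  case (Cons v vs)
  then show ?case using dir_deriv_cong[OF assms(1) Cons.prems, of "iter_deriv vs f" "iter_deriv vs g"]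
    by simp
qed

lemma differentiable_on_cong_open:
  assumes "open S" "f differentiable_on S" "\<And>y. y \<in> S \<Longrightarrow> f y = g y"
  shows "g differentiable_on S"
  using assms unfolding differentiable_on_eq_differentiable_at[OF assms(1)] differentiable_def
  by (meson has_derivative_transform_within_open)

lemma dir_deriv_const: "dir_deriv v (\<lambda>_. c) = (\<lambda>_. 0)"
  unfolding dir_deriv_def by (rule ext, rule vector_derivative_at) simp

lemma iter_deriv_const: "vs \<noteq> [] \<Longrightarrow> iter_deriv vs (\<lambda>_. c) = (\<lambda>_. 0)"
proof (induction vs)
  case Nil then show ?case by simp
next
  case (Cons v vs)
  then show ?case by (cases vs) (auto simp: dir_deriv_const)
qed

lemma dir_deriv_zero_dir: "dir_deriv 0 f = (\<lambda>_. 0)"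
  unfolding dir_deriv_def by (rule ext, rule vector_derivative_at) simp

lemma iter_deriv_zero_dir: "0 \<in> set vs \<Longrightarrow> iter_deriv vs f = (\<lambda>_. 0)"
proof (induction vs)
  case Nil then show ?case by simp
next
  case (Cons v vs)
  show ?case
  proof (cases "v = 0")
    case True then show ?thesis by (simp add: dir_deriv_zero_dir)
  next
    case False then show ?thesis using Cons by (simp add: dir_deriv_const)
  qed
qed


section \<open>Linearity and Leibniz rule\<close>

lemma iter_deriv_linear:
  assumes L: "bounded_linear L" and S: "open S"
    and d: "\<And>a. length a < length vs \<Longrightarrow> iter_deriv a f differentiable_on S"
    and y: "y \<in> S"
  shows "iter_deriv vs (\<lambda>y. L (f y)) y = L (iter_deriv vs f y)"
  using d y
proof (induction vs arbitrary: y)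
  case Nil then show ?case by simp
next
  case (Cons v vs)
  have IH: "\<And>y. y \<in> S \<Longrightarrow> iter_deriv vs (\<lambda>y. L (f y)) y = L (iter_deriv vs f y)"
    using Cons.IH Cons.prems(1) by force
  have "iter_deriv vs f differentiable_on S" using Cons.prems(1) by force
  then obtain F' where F': "(iter_deriv vs f has_derivative F') (at y)"
    using Cons.prems(2) S unfolding differentiable_on_eq_differentiable_at[OF S] differentiable_def
    by blast
  have "iter_deriv (v # vs) (\<lambda>y. L (f y)) y = dir_deriv v (\<lambda>y. L (iter_deriv vs f y)) y"
    using dir_deriv_cong[OF S Cons.prems(2), of "iter_deriv vs (\<lambda>y. L (f y))"] IH by simp
  also have "\<dots> = L (F' v)"
    by (rule dir_deriv_eq) (rule bounded_linear.has_derivative[OF L F'])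
  also have "\<dots> = L (iter_deriv (v # vs) f y)" using dir_deriv_eq[OF F'] by simp
  finally show ?case .
qed

lemma iter_deriv_linear_diff:
  assumes L: "bounded_linear L" and S: "open S"
    and d: "\<And>a. length a \<le> length vs \<Longrightarrow> iter_deriv a f differentiable_on S"
  shows "iter_deriv vs (\<lambda>y. L (f y)) differentiable_on S"
proof -
  have "(\<lambda>y. L (iter_deriv vs f y)) differentiable_on S"
    using d[of vs] L unfolding differentiable_on_def
    by (auto intro: differentiable_compose[OF bounded_linear_imp_differentiable[OF L]])
  then show ?thesis
  proof (rule differentiable_on_cong_open[OF S])
    fix y assume y: "y \<in> S"
    have d': "\<And>a. length a < length vs \<Longrightarrow> iter_deriv a f differentiable_on S" using d by simp
    show "L (iter_deriv vs f y) = iter_deriv vs (\<lambda>y. L (f y)) y"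
      using iter_deriv_linear[OF L S d' y] by simp
  qed
qed

lemma iter_deriv_add:
  assumes S: "open S"
    and d: "\<And>a. length a < length vs \<Longrightarrow> iter_deriv a f differentiable_on S"
    and e: "\<And>a. length a < length vs \<Longrightarrow> iter_deriv a g differentiable_on S"
    and y: "y \<in> S"
  shows "iter_deriv vs (\<lambda>y. f y + g y) y = iter_deriv vs f y + iter_deriv vs g y"
  using d e y
proof (induction vs arbitrary: y)
  case Nil then show ?case by simp
next
  case (Cons v vs)
  have IH: "\<And>y. y \<in> S \<Longrightarrow> iter_deriv vs (\<lambda>y. f y + g y) y = iter_deriv vs f y + iter_deriv vs g y"
    using Cons.IH Cons.prems(1,2) by force
  have "iter_deriv vs f differentiable_on S" using Cons.prems(1) by force
  then obtain F' where F': "(iter_deriv vs f has_derivative F') (at y)"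
    using Cons.prems(3) S unfolding differentiable_on_eq_differentiable_at[OF S] differentiable_def
    by blast
  have "iter_deriv vs g differentiable_on S" using Cons.prems(2) by force
  then obtain G' where G': "(iter_deriv vs g has_derivative G') (at y)"
    using Cons.prems(3) S unfolding differentiable_on_eq_differentiable_at[OF S] differentiable_def
    by blast
  have "iter_deriv (v # vs) (\<lambda>y. f y + g y) y = dir_deriv v (\<lambda>y. iter_deriv vs f y + iter_deriv vs g y) y"
    using dir_deriv_cong[OF S Cons.prems(3), of "iter_deriv vs (\<lambda>y. f y + g y)"] IH by simp
  also have "\<dots> = F' v + G' v"
    by (rule dir_deriv_eq) (rule has_derivative_add[OF F' G'])
  also have "\<dots> = iter_deriv (v # vs) f y + iter_deriv (v # vs) g y"
    using dir_deriv_eq[OF F'] dir_deriv_eq[OF G'] by simp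
  finally show ?case .
qed

lemma iter_deriv_add_diff:
  assumes S: "open S"
    and d: "\<And>a. length a \<le> length vs \<Longrightarrow> iter_deriv a f differentiable_on S"
    and e: "\<And>a. length a \<le> length vs \<Longrightarrow> iter_deriv a g differentiable_on S"
  shows "iter_deriv vs (\<lambda>y. f y + g y) differentiable_on S"
proof -
  have "(\<lambda>y. iter_deriv vs f y + iter_deriv vs g y) differentiable_on S"
    using d[of vs] e[of vs] by (auto intro: differentiable_on_add)
  then show ?thesis
  proof (rule differentiable_on_cong_open[OF S])
    fix y assume y: "y \<in> S"
    have d': "\<And>a. length a < length vs \<Longrightarrow> iter_deriv a f differentiable_on S" using d by simp
    have e': "\<And>a. length a < length vs \<Longrightarrow> iter_deriv a g differentiable_on S" using e by simp
    show "iter_deriv vs f y + iter_deriv vs g y = iter_deriv vs (\<lambda>y. f y + g y) y"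
      using iter_deriv_add[OF S d' e' y] by simp
  qed
qed

fun splits :: "'a list \<Rightarrow> ('a list \<times> 'a list) list" where
  "splits [] = [([], [])]"
| "splits (v # vs) = concat (map (\<lambda>(a, b). [(v # a, b), (a, v # b)]) (splits vs))"

lemma splits_props:
  "(a, b) \<in> set (splits vs) \<Longrightarrow> length a + length b = length vs \<and> set a \<subseteq> set vs \<and> set b \<subseteq> set vs
     \<and> length (filter P a) + length (filter P b) = length (filter P vs)"
proof (induction vs arbitrary: a b)
  case Nil then show ?case by simp
next
  case (Cons v vs)
  then obtain a' b' where ab: "(a', b') \<in> set (splits vs)" and
    c: "(a, b) = (v # a', b') \<or> (a, b) = (a', v # b')" by auto
  from Cons.IH[OF ab] c show ?case by auto
qed

lemma splits_nil: "(a, []) \<in> set (splits vs) \<Longrightarrow> a = vs"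
  by (induction vs arbitrary: a) auto

lemma sum_list_concat': "sum_list (concat xss) = sum_list (map sum_list xss)"
  by (induction xss) auto

lemma has_derivative_sum_list:
  assumes "\<And>x. x \<in> set xs \<Longrightarrow> (F x has_derivative F' x) (at y)"
  shows "((\<lambda>y. \<Sum>x\<leftarrow>xs. F x y) has_derivative (\<lambda>h. \<Sum>x\<leftarrow>xs. F' x h)) (at y)"
  using assms
proof (induction xs)
  case Nil then show ?case by (simp add: has_derivative_const)
next
  case (Cons x xs)
  then show ?case by (auto intro!: has_derivative_add)
qed

lemma leibniz:
  fixes f g :: "'a::real_normed_vector \<Rightarrow> 'b::real_normed_algebra"
  assumes S: "open S"
    and d: "\<And>a. length a < length vs \<Longrightarrow> iter_deriv a f differentiable_on S"
    and e: "\<And>a. length a < length vs \<Longrightarrow> iter_deriv a g differentiable_on S"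
    and y: "y \<in> S"
  shows "iter_deriv vs (\<lambda>y. f y * g y) y = (\<Sum>(a, b)\<leftarrow>splits vs. iter_deriv a f y * iter_deriv b g y)"
  using d e y
proof (induction vs arbitrary: y)
  case Nil then show ?case by simp
next
  case (Cons v vs)
  have IH: "\<And>y. y \<in> S \<Longrightarrow> iter_deriv vs (\<lambda>y. f y * g y) y = (\<Sum>(a, b)\<leftarrow>splits vs. iter_deriv a f y * iter_deriv b g y)"
    using Cons.IH Cons.prems(1,2) by force
  define Fd where "Fd a = frechet_derivative (iter_deriv a f) (at y)" for a
  define Gd where "Gd a = frechet_derivative (iter_deriv a g) (at y)" for a
  have F: "(iter_deriv a f has_derivative Fd a) (at y)" if "length a < Suc (length vs)" for a
  proof -
    have "iter_deriv a f differentiable_on S" using Cons.prems(1) that by simp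
    then have "iter_deriv a f differentiable (at y)"
      using Cons.prems(3) unfolding differentiable_on_eq_differentiable_at[OF S] by blast
    then show ?thesis unfolding Fd_def by (simp add: frechet_derivative_works[symmetric])
  qed
  have G: "(iter_deriv a g has_derivative Gd a) (at y)" if "length a < Suc (length vs)" for a
  proof -
    have "iter_deriv a g differentiable_on S" using Cons.prems(2) that by simp
    then have "iter_deriv a g differentiable (at y)"
      using Cons.prems(3) unfolding differentiable_on_eq_differentiable_at[OF S] by blast
    then show ?thesis unfolding Gd_def by (simp add: frechet_derivative_works[symmetric])
  qed
  let ?T = "\<lambda>(a, b) y. iter_deriv a f y * iter_deriv b g y"
  let ?T' = "\<lambda>(a, b) h. iter_deriv a f y * Gd b h + Fd a h * iter_deriv b g y"
  have TD: "(?T x has_derivative ?T' x) (at y)" if "x \<in> set (splits vs)" for x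
  proof -
    obtain a b where x: "x = (a, b)" by fastforce
    have "length a < Suc (length vs)" "length b < Suc (length vs)"
      using splits_props[of a b vs "\<lambda>_. True"] that x by auto
    then show ?thesis unfolding x using has_derivative_mult[OF F G] by simp
  qed
  have "iter_deriv (v # vs) (\<lambda>y. f y * g y) y = dir_deriv v (\<lambda>y. \<Sum>x\<leftarrow>splits vs. ?T x y) y"
    using dir_deriv_cong[OF S Cons.prems(3), of "iter_deriv vs (\<lambda>y. f y * g y)"] IH
    by (simp add: case_prod_beta')
  also have "\<dots> = (\<Sum>x\<leftarrow>splits vs. ?T' x v)"
    by (rule dir_deriv_eq) (rule has_derivative_sum_list[OF TD])
  also have "\<dots> = (\<Sum>(a, b)\<leftarrow>splits (v # vs). iter_deriv a f y * iter_deriv b g y)"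
  proof -
    have "?T' x v = (\<Sum>(a, b)\<leftarrow>(\<lambda>(a, b). [(v # a, b), (a, v # b)]) x. iter_deriv a f y * iter_deriv b g y)"
      if "x \<in> set (splits vs)" for x
    proof -
      obtain a b where x: "x = (a, b)" by fastforce
      have "length a < Suc (length vs)" "length b < Suc (length vs)"
        using splits_props[of a b vs "\<lambda>_. True"] that x by auto
      then show ?thesis using dir_deriv_eq[OF F] dir_deriv_eq[OF G] x by (simp add: add.commute)
    qed
    then have "(\<Sum>x\<leftarrow>splits vs. ?T' x v) = (\<Sum>x\<leftarrow>splits vs. (\<Sum>(a, b)\<leftarrow>(\<lambda>(a, b). [(v # a, b), (a, v # b)]) x. iter_deriv a f y * iter_deriv b g y))"
      by (intro arg_cong[where f=sum_list] map_cong) auto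
    then show ?thesis
      by (simp only: splits.simps map_concat sum_list_concat' map_map o_def)
  qed
  finally show ?case .
qed

lemma leibniz_diff:
  fixes f g :: "'a::real_normed_vector \<Rightarrow> 'b::real_normed_algebra"
  assumes S: "open S"
    and d: "\<And>a. length a \<le> length vs \<Longrightarrow> iter_deriv a f differentiable_on S"
    and e: "\<And>a. length a \<le> length vs \<Longrightarrow> iter_deriv a g differentiable_on S"
  shows "iter_deriv vs (\<lambda>y. f y * g y) differentiable_on S"
proof -
  have "(\<lambda>y. \<Sum>(a, b)\<leftarrow>splits vs. iter_deriv a f y * iter_deriv b g y) differentiable_on S"
    unfolding differentiable_on_eq_differentiable_at[OF S]
  proof
    fix y assume y: "y \<in> S"
    have "\<And>x. x \<in> set (splits vs) \<Longrightarrow> (\<lambda>y. case x of (a, b) \<Rightarrow> iter_deriv a f y * iter_deriv b g y) differentiable (at y)"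
    proof -
      fix x assume x: "x \<in> set (splits vs)"
      obtain a b where xe: "x = (a, b)" by fastforce
      have "length a \<le> length vs" "length b \<le> length vs"
        using splits_props[of a b vs "\<lambda>_. True"] x xe by auto
      then have "iter_deriv a f differentiable (at y)" "iter_deriv b g differentiable (at y)"
        using d e y unfolding differentiable_on_eq_differentiable_at[OF S] by blast+
      then show "?thesis x" unfolding xe by (auto intro: differentiable_mult)
    qed
    then have "\<And>x. x \<in> set (splits vs) \<Longrightarrow> ((\<lambda>y. case x of (a, b) \<Rightarrow> iter_deriv a f y * iter_deriv b g y) has_derivative
         frechet_derivative (\<lambda>y. case x of (a, b) \<Rightarrow> iter_deriv a f y * iter_deriv b g y) (at y)) (at y)"
      using frechet_derivative_works by blast
    from has_derivative_sum_list[where xs="splits vs" and F="\<lambda>x y. case x of (a, b) \<Rightarrow> iter_deriv a f y * iter_deriv b g y", OF this]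
    have "((\<lambda>y. \<Sum>x\<leftarrow>splits vs. case x of (a, b) \<Rightarrow> iter_deriv a f y * iter_deriv b g y) differentiable (at y))"
      unfolding differentiable_def by blast
    then show "(\<lambda>y. \<Sum>(a, b)\<leftarrow>splits vs. iter_deriv a f y * iter_deriv b g y) differentiable (at y)"
      by (simp add: case_prod_beta')
  qed
  then show ?thesis
  proof (rule differentiable_on_cong_open[OF S])
    fix y assume y: "y \<in> S"
    have d': "\<And>a. length a < length vs \<Longrightarrow> iter_deriv a f differentiable_on S" using d by simp
    have e': "\<And>a. length a < length vs \<Longrightarrow> iter_deriv a g differentiable_on S" using e by simp
    show "(\<Sum>(a, b)\<leftarrow>splits vs. iter_deriv a f y * iter_deriv b g y) = iter_deriv vs (\<lambda>y. f y * g y) y"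
      using leibniz[OF S d' e' y] by simp
  qed
qed


section \<open>Smoothness closure\<close>

lemma smooth_mult:
  fixes f g :: "'a::real_normed_vector \<Rightarrow> 'b::real_normed_algebra"
  assumes "open S" "smooth_on S f" "smooth_on S g"
  shows "smooth_on S (\<lambda>y. f y * g y)"
  using assms unfolding smooth_on_def by (auto intro: leibniz_diff)

lemma smooth_add:
  assumes "open S" "smooth_on S f" "smooth_on S g"
  shows "smooth_on S (\<lambda>y. f y + g y)"
  using assms unfolding smooth_on_def by (auto intro: iter_deriv_add_diff)

lemma smooth_linear_comp:
  assumes "bounded_linear L" "open S" "smooth_on S f"
  shows "smooth_on S (\<lambda>y. L (f y))"
  using assms unfolding smooth_on_def by (auto intro: iter_deriv_linear_diff)

lemma smooth_const: "smooth_on S (\<lambda>_. c)"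
  unfolding smooth_on_def
proof
  fix vs show "iter_deriv vs (\<lambda>_. c) differentiable_on S"
    by (cases "vs = []") (simp_all add: iter_deriv_const)
qed

lemma smooth_iter_deriv: "smooth_on S f \<Longrightarrow> smooth_on S (iter_deriv ws f)"
  unfolding smooth_on_def by (metis iter_deriv_append)

lemma smooth_bounded_linear:
  assumes L: "bounded_linear L"
  shows "smooth_on S L"
  unfolding smooth_on_def
proof
  fix vs
  show "iter_deriv vs L differentiable_on S"
  proof (cases vs rule: rev_cases)
    case Nil then show ?thesis
      by (simp add: bounded_linear_imp_differentiable[OF L] differentiable_at_imp_differentiable_on)
  next
    case (snoc ws v)
    have "dir_deriv v L = (\<lambda>_. L v)"
      by (rule ext, rule dir_deriv_eq, rule bounded_linear_imp_has_derivative[OF L])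
    then show ?thesis using snoc
      by (cases "ws = []") (simp_all add: iter_deriv_append iter_deriv_const)
  qed
qed

lemma iter_deriv_sum:
  assumes S: "open S" "finite B" "\<And>b. b \<in> B \<Longrightarrow> smooth_on S (F b)" "y \<in> S"
  shows "iter_deriv vs (\<lambda>y. \<Sum>b\<in>B. F b y) y = (\<Sum>b\<in>B. iter_deriv vs (F b) y)
     \<and> smooth_on S (\<lambda>y. \<Sum>b\<in>B. F b y)"
  using assms(2,3)
proof (induction B rule: finite_induct)
  case empty then show ?case using smooth_const[of S 0] by (simp add: iter_deriv_const) (cases "vs = []", simp_all add: iter_deriv_const)
next
  case (insert b B)
  have sb: "smooth_on S (F b)" and sB: "smooth_on S (\<lambda>y. \<Sum>b\<in>B. F b y)"
    and eq: "iter_deriv vs (\<lambda>y. \<Sum>b\<in>B. F b y) y = (\<Sum>b\<in>B. iter_deriv vs (F b) y)"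
    using insert by auto
  have "iter_deriv vs (\<lambda>y. F b y + (\<Sum>b\<in>B. F b y)) y = iter_deriv vs (F b) y + iter_deriv vs (\<lambda>y. \<Sum>b\<in>B. F b y) y"
    by (rule iter_deriv_add[OF S(1) _ _ S(4)]) (use sb sB in \<open>auto simp: smooth_on_def\<close>)
  moreover have "smooth_on S (\<lambda>y. F b y + (\<Sum>b\<in>B. F b y))" by (rule smooth_add[OF S(1) sb sB])
  ultimately show ?case using insert eq by simp
qed

lemma norm_sum_list_le:
  assumes "\<And>x. x \<in> set xs \<Longrightarrow> norm (F x) \<le> G x"
  shows "norm (\<Sum>x\<leftarrow>xs. F x) \<le> (\<Sum>x\<leftarrow>xs. G x)"
  using assms
proof (induction xs)
  case Nil then show ?case by simp
next
  case (Cons x xs)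
  then have "norm (F x) \<le> G x" "norm (\<Sum>x\<leftarrow>xs. F x) \<le> (\<Sum>x\<leftarrow>xs. G x)" by auto
  then show ?case using norm_triangle_ineq[of "F x" "\<Sum>x\<leftarrow>xs. F x"] by simp
qed

lemma sum_list_mult_const': "(\<Sum>x\<leftarrow>xs. F x * (c::real)) = (\<Sum>x\<leftarrow>xs. F x) * c"
  by (induction xs) (auto simp: algebra_simps)

section \<open>Symbol classes\<close>

definition Dset :: "((real^'n::finite) \<times> (real^'n)) set" where
  "Dset = range dx \<union> range dxi"

definition nxi :: "((real^'n::finite) \<times> (real^'n)) list \<Rightarrow> nat" where
  "nxi ds = length (filter (\<lambda>v. fst v = 0) ds)"

definition cls :: "(real^'n::finite) set \<Rightarrow> (real^'n) set \<Rightarrow>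
   (real \<Rightarrow> (real^'n) \<times> (real^'n) \<Rightarrow> 'b::real_normed_vector) \<Rightarrow>
   (real \<Rightarrow> (real^'n) \<times> (real^'n) \<Rightarrow> real) \<Rightarrow> (real \<Rightarrow> (real^'n) \<times> (real^'n) \<Rightarrow> real) \<Rightarrow> bool" where
  "cls U K g M r \<longleftrightarrow> (\<forall>\<alpha>>0. smooth_on (U \<times> UNIV) (g \<alpha>)) \<and>
     (\<forall>ds. set ds \<subseteq> Dset \<longrightarrow> (\<exists>C. \<forall>\<alpha>\<in>{0<..1}. \<forall>x\<in>K. \<forall>\<xi>.
        norm (iter_deriv ds (g \<alpha>) (x, \<xi>)) \<le> C * M \<alpha> (x, \<xi>) * r \<alpha> (x, \<xi>) ^ length ds * jbr \<xi> powr (- real (nxi ds))))"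

lemma jbr_ge1: "1 \<le> jbr \<xi>"
  unfolding jbr_def by simp

lemma jbr_pos: "0 < jbr \<xi>"
  using jbr_ge1[of \<xi>] by linarith

lemma jbr_ne0[simp]: "jbr \<xi> \<noteq> 0"
  using jbr_pos[of \<xi>] by linarith

lemma norm_le_jbr: "norm \<xi> \<le> jbr \<xi>"
  unfolding jbr_def by (rule real_le_rsqrt) simp

lemma nxi_props: "nxi [] = 0" "nxi (xs @ ys) = nxi xs + nxi ys"
  by (auto simp: nxi_def)


context
  fixes U K :: "(real^'n::finite) set"
  assumes U: "open U" and KU: "K \<subseteq> U"
begin

lemma V_open: "open (U \<times> (UNIV :: (real^'n) set))"
  using U by (simp add: open_Times)

lemma cls_smooth: "cls U K g M r \<Longrightarrow> \<alpha> > 0 \<Longrightarrow> smooth_on (U \<times> UNIV) (g \<alpha>)"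
  by (simp add: cls_def)

lemma cls_bound:
  assumes "cls U K g M r"
  obtains Cf where "\<And>ds \<alpha> x \<xi>. set ds \<subseteq> Dset \<Longrightarrow> \<alpha> \<in> {0<..1} \<Longrightarrow> x \<in> K \<Longrightarrow>
     norm (iter_deriv ds (g \<alpha>) (x, \<xi>)) \<le> Cf ds * M \<alpha> (x, \<xi>) * r \<alpha> (x, \<xi>) ^ length ds * jbr \<xi> powr (- real (nxi ds))"
  using assms unfolding cls_def by metis

lemma cls_const: "cls U K (\<lambda>_ _. c) (\<lambda>_ _. 1) r"
  unfolding cls_def
proof (intro conjI allI impI)
  fix \<alpha> :: real show "smooth_on (U \<times> UNIV) (\<lambda>_. c)" by (rule smooth_const)
next
  fix ds :: "((real^'n) \<times> (real^'n)) list"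
  show "\<exists>C. \<forall>\<alpha>\<in>{0<..1}. \<forall>x\<in>K. \<forall>\<xi>. norm (iter_deriv ds (\<lambda>_. c) (x, \<xi>)) \<le> C * 1 * r \<alpha> (x, \<xi>) ^ length ds * jbr \<xi> powr (- real (nxi ds))"
  proof (cases "ds = []")
    case True
    then show ?thesis by (intro exI[of _ "norm c"]) (auto simp: nxi_def)
  next
    case False
    then show ?thesis by (intro exI[of _ 0]) (simp add: iter_deriv_const)
  qed
qed

lemma cls_add:
  assumes f: "cls U K f M r" and g: "cls U K g M r"
  shows "cls U K (\<lambda>\<alpha> w. f \<alpha> w + g \<alpha> w) M r"
proof -
  obtain Cf where Cf: "\<And>ds \<alpha> x \<xi>. set ds \<subseteq> Dset \<Longrightarrow> \<alpha> \<in> {0<..1} \<Longrightarrow> x \<in> K \<Longrightarrow>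
     norm (iter_deriv ds (f \<alpha>) (x, \<xi>)) \<le> Cf ds * M \<alpha> (x, \<xi>) * r \<alpha> (x, \<xi>) ^ length ds * jbr \<xi> powr (- real (nxi ds))"
    using cls_bound[OF f] by blast
  obtain Cg where Cg: "\<And>ds \<alpha> x \<xi>. set ds \<subseteq> Dset \<Longrightarrow> \<alpha> \<in> {0<..1} \<Longrightarrow> x \<in> K \<Longrightarrow>
     norm (iter_deriv ds (g \<alpha>) (x, \<xi>)) \<le> Cg ds * M \<alpha> (x, \<xi>) * r \<alpha> (x, \<xi>) ^ length ds * jbr \<xi> powr (- real (nxi ds))"
    using cls_bound[OF g] by blast
  show ?thesis unfolding cls_def
  proof (intro conjI allI impI)
    fix \<alpha> :: real assume "\<alpha> > 0"
    then show "smooth_on (U \<times> UNIV) (\<lambda>w. f \<alpha> w + g \<alpha> w)"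
      using smooth_add[OF V_open cls_smooth[OF f] cls_smooth[OF g]] by simp
  next
    fix ds :: "((real^'n) \<times> (real^'n)) list" assume ds: "set ds \<subseteq> Dset"
    show "\<exists>C. \<forall>\<alpha>\<in>{0<..1}. \<forall>x\<in>K. \<forall>\<xi>. norm (iter_deriv ds (\<lambda>w. f \<alpha> w + g \<alpha> w) (x, \<xi>)) \<le> C * M \<alpha> (x, \<xi>) * r \<alpha> (x, \<xi>) ^ length ds * jbr \<xi> powr (- real (nxi ds))"
    proof (rule exI[of _ "Cf ds + Cg ds"], intro ballI allI)
      fix \<alpha> :: real and x \<xi> :: "real^'n" assume a: "\<alpha> \<in> {0<..1}" and x: "x \<in> K"
      have xV: "(x, \<xi>) \<in> U \<times> UNIV" using x KU by auto
      have sf: "smooth_on (U \<times> UNIV) (f \<alpha>)" "smooth_on (U \<times> UNIV) (g \<alpha>)"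
        using a cls_smooth[OF f] cls_smooth[OF g] by auto
      have "iter_deriv ds (\<lambda>w. f \<alpha> w + g \<alpha> w) (x, \<xi>) = iter_deriv ds (f \<alpha>) (x, \<xi>) + iter_deriv ds (g \<alpha>) (x, \<xi>)"
        by (rule iter_deriv_add[OF V_open _ _ xV]) (use sf in \<open>auto simp: smooth_on_def\<close>)
      then have "norm (iter_deriv ds (\<lambda>w. f \<alpha> w + g \<alpha> w) (x, \<xi>)) \<le> norm (iter_deriv ds (f \<alpha>) (x, \<xi>)) + norm (iter_deriv ds (g \<alpha>) (x, \<xi>))"
        by (simp add: norm_triangle_ineq)
      also have "\<dots> \<le> Cf ds * M \<alpha> (x, \<xi>) * r \<alpha> (x, \<xi>) ^ length ds * jbr \<xi> powr (- real (nxi ds)) + Cg ds * M \<alpha> (x, \<xi>) * r \<alpha> (x, \<xi>) ^ length ds * jbr \<xi> powr (- real (nxi ds))"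
        using Cf[OF ds a x] Cg[OF ds a x] by (rule add_mono)
      finally show "norm (iter_deriv ds (\<lambda>w. f \<alpha> w + g \<alpha> w) (x, \<xi>)) \<le> (Cf ds + Cg ds) * M \<alpha> (x, \<xi>) * r \<alpha> (x, \<xi>) ^ length ds * jbr \<xi> powr (- real (nxi ds))"
        by (simp add: algebra_simps)
    qed
  qed
qed

lemma cls_mult:
  fixes f g :: "real \<Rightarrow> (real^'n) \<times> (real^'n) \<Rightarrow> 'b::real_normed_algebra"
  assumes f: "cls U K f M1 r" and g: "cls U K g M2 r"
  shows "cls U K (\<lambda>\<alpha> w. f \<alpha> w * g \<alpha> w) (\<lambda>\<alpha> w. M1 \<alpha> w * M2 \<alpha> w) r"
proof -
  obtain Cf where Cf: "\<And>ds \<alpha> x \<xi>. set ds \<subseteq> Dset \<Longrightarrow> \<alpha> \<in> {0<..1} \<Longrightarrow> x \<in> K \<Longrightarrow>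
     norm (iter_deriv ds (f \<alpha>) (x, \<xi>)) \<le> Cf ds * M1 \<alpha> (x, \<xi>) * r \<alpha> (x, \<xi>) ^ length ds * jbr \<xi> powr (- real (nxi ds))"
    using cls_bound[OF f] by blast
  obtain Cg where Cg: "\<And>ds \<alpha> x \<xi>. set ds \<subseteq> Dset \<Longrightarrow> \<alpha> \<in> {0<..1} \<Longrightarrow> x \<in> K \<Longrightarrow>
     norm (iter_deriv ds (g \<alpha>) (x, \<xi>)) \<le> Cg ds * M2 \<alpha> (x, \<xi>) * r \<alpha> (x, \<xi>) ^ length ds * jbr \<xi> powr (- real (nxi ds))"
    using cls_bound[OF g] by blast
  show ?thesis unfolding cls_def
  proof (intro conjI allI impI)
    fix \<alpha> :: real assume "\<alpha> > 0"
    then show "smooth_on (U \<times> UNIV) (\<lambda>w. f \<alpha> w * g \<alpha> w)"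
      using smooth_mult[OF V_open cls_smooth[OF f] cls_smooth[OF g]] by simp
  next
    fix ds :: "((real^'n) \<times> (real^'n)) list" assume ds: "set ds \<subseteq> Dset"
    show "\<exists>C. \<forall>\<alpha>\<in>{0<..1}. \<forall>x\<in>K. \<forall>\<xi>. norm (iter_deriv ds (\<lambda>w. f \<alpha> w * g \<alpha> w) (x, \<xi>)) \<le> C * (M1 \<alpha> (x, \<xi>) * M2 \<alpha> (x, \<xi>)) * r \<alpha> (x, \<xi>) ^ length ds * jbr \<xi> powr (- real (nxi ds))"
    proof (rule exI[of _ "\<Sum>(a, b)\<leftarrow>splits ds. Cf a * Cg b"], intro ballI allI)
      fix \<alpha> :: real and x \<xi> :: "real^'n" assume a: "\<alpha> \<in> {0<..1}" and x: "x \<in> K"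
      have xV: "(x, \<xi>) \<in> U \<times> UNIV" using x KU by auto
      have sf: "smooth_on (U \<times> UNIV) (f \<alpha>)" "smooth_on (U \<times> UNIV) (g \<alpha>)"
        using a cls_smooth[OF f] cls_smooth[OF g] by auto
      define X where "X = M1 \<alpha> (x, \<xi>) * M2 \<alpha> (x, \<xi>) * r \<alpha> (x, \<xi>) ^ length ds * jbr \<xi> powr (- real (nxi ds))"
      have "iter_deriv ds (\<lambda>w. f \<alpha> w * g \<alpha> w) (x, \<xi>) = (\<Sum>(a, b)\<leftarrow>splits ds. iter_deriv a (f \<alpha>) (x, \<xi>) * iter_deriv b (g \<alpha>) (x, \<xi>))"
        by (rule leibniz[OF V_open _ _ xV]) (use sf in \<open>auto simp: smooth_on_def\<close>)
      also have "norm \<dots> \<le> (\<Sum>(a, b)\<leftarrow>splits ds. Cf a * Cg b * X)"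
      proof (rule norm_sum_list_le)
        fix y assume y: "y \<in> set (splits ds)"
        obtain a b where yab: "y = (a, b)" by fastforce
        have sp: "length a + length b = length ds" "set a \<subseteq> Dset" "set b \<subseteq> Dset" "nxi a + nxi b = nxi ds"
          using splits_props[of a b ds "\<lambda>v. fst v = 0"] y yab ds by (auto simp: nxi_def)
        have ba: "norm (iter_deriv a (f \<alpha>) (x, \<xi>)) \<le> Cf a * M1 \<alpha> (x, \<xi>) * r \<alpha> (x, \<xi>) ^ length a * jbr \<xi> powr (- real (nxi a))"
          using Cf[OF sp(2) a x] .
        have bb: "norm (iter_deriv b (g \<alpha>) (x, \<xi>)) \<le> Cg b * M2 \<alpha> (x, \<xi>) * r \<alpha> (x, \<xi>) ^ length b * jbr \<xi> powr (- real (nxi b))"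
          using Cg[OF sp(3) a x] .
        have "norm (iter_deriv a (f \<alpha>) (x, \<xi>) * iter_deriv b (g \<alpha>) (x, \<xi>)) \<le> norm (iter_deriv a (f \<alpha>) (x, \<xi>)) * norm (iter_deriv b (g \<alpha>) (x, \<xi>))"
          by (rule norm_mult_ineq)
        also have "\<dots> \<le> (Cf a * M1 \<alpha> (x, \<xi>) * r \<alpha> (x, \<xi>) ^ length a * jbr \<xi> powr (- real (nxi a))) * (Cg b * M2 \<alpha> (x, \<xi>) * r \<alpha> (x, \<xi>) ^ length b * jbr \<xi> powr (- real (nxi b)))"
          by (rule mult_mono[OF ba bb]) (use ba norm_ge_zero order_trans in blast)+
        also have "\<dots> = Cf a * Cg b * X"
        proof -
          have "jbr \<xi> powr (- real (nxi a)) * jbr \<xi> powr (- real (nxi b)) = jbr \<xi> powr (- real (nxi ds))"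
          proof -
            have e: "- real (nxi ds) = - real (nxi a) + - real (nxi b)" using sp(4) by linarith
            show ?thesis by (simp only: e powr_add)
          qed
          moreover have "r \<alpha> (x, \<xi>) ^ length a * r \<alpha> (x, \<xi>) ^ length b = r \<alpha> (x, \<xi>) ^ length ds"
            using sp(1) by (simp add: power_add[symmetric])
          ultimately show ?thesis unfolding X_def by (simp add: algebra_simps)
        qed
        finally show "norm (case y of (a, b) \<Rightarrow> iter_deriv a (f \<alpha>) (x, \<xi>) * iter_deriv b (g \<alpha>) (x, \<xi>)) \<le> (case y of (a, b) \<Rightarrow> Cf a * Cg b * X)"
          using yab by simp
      qed
      also have "\<dots> = (\<Sum>(a, b)\<leftarrow>splits ds. Cf a * Cg b) * X"
        using sum_list_mult_const'[of "\<lambda>(a, b). Cf a * Cg b" X "splits ds"] by (simp add: case_prod_beta')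
      finally show "norm (iter_deriv ds (\<lambda>w. f \<alpha> w * g \<alpha> w) (x, \<xi>)) \<le> (\<Sum>(a, b)\<leftarrow>splits ds. Cf a * Cg b) * (M1 \<alpha> (x, \<xi>) * M2 \<alpha> (x, \<xi>)) * r \<alpha> (x, \<xi>) ^ length ds * jbr \<xi> powr (- real (nxi ds))"
        unfolding X_def by (simp add: mult.assoc)
    qed
  qed
qed


lemma bound_mono_aux:
  fixes C M N R J :: real
  assumes "0 \<le> M" "M \<le> N" "0 \<le> R" "0 \<le> J"
  shows "C * M * R * J \<le> \<bar>C\<bar> * N * R * J"
proof -
  have "C * M \<le> \<bar>C\<bar> * M" using assms(1) by (intro mult_right_mono) auto
  also have "\<dots> \<le> \<bar>C\<bar> * N" using assms(2) by (intro mult_left_mono) auto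
  finally have "C * M \<le> \<bar>C\<bar> * N" .
  then have "C * M * R \<le> \<bar>C\<bar> * N * R" using assms(3) by (rule mult_right_mono)
  then show ?thesis using assms(4) by (rule mult_right_mono)
qed

lemma cls_mono:
  assumes g: "cls U K g M r"
    and M: "\<And>\<alpha> x \<xi>. \<alpha> \<in> {0<..1} \<Longrightarrow> x \<in> K \<Longrightarrow> 0 \<le> M \<alpha> (x, \<xi>) \<and> M \<alpha> (x, \<xi>) \<le> c * M' \<alpha> (x, \<xi>)"
    and r: "\<And>\<alpha> x \<xi>. \<alpha> \<in> {0<..1} \<Longrightarrow> x \<in> K \<Longrightarrow> 0 \<le> r \<alpha> (x, \<xi>)"
  shows "cls U K g M' r"
proof -
  obtain Cf where Cf: "\<And>ds \<alpha> x \<xi>. set ds \<subseteq> Dset \<Longrightarrow> \<alpha> \<in> {0<..1} \<Longrightarrow> x \<in> K \<Longrightarrow>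
     norm (iter_deriv ds (g \<alpha>) (x, \<xi>)) \<le> Cf ds * M \<alpha> (x, \<xi>) * r \<alpha> (x, \<xi>) ^ length ds * jbr \<xi> powr (- real (nxi ds))"
    using cls_bound[OF g] by blast
  show ?thesis unfolding cls_def
  proof (intro conjI allI impI)
    fix \<alpha> :: real assume "\<alpha> > 0"
    then show "smooth_on (U \<times> UNIV) (g \<alpha>)" using cls_smooth[OF g] by simp
  next
    fix ds :: "((real^'n) \<times> (real^'n)) list" assume ds: "set ds \<subseteq> Dset"
    show "\<exists>C. \<forall>\<alpha>\<in>{0<..1}. \<forall>x\<in>K. \<forall>\<xi>. norm (iter_deriv ds (g \<alpha>) (x, \<xi>)) \<le> C * M' \<alpha> (x, \<xi>) * r \<alpha> (x, \<xi>) ^ length ds * jbr \<xi> powr (- real (nxi ds))"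
    proof (rule exI[of _ "\<bar>Cf ds\<bar> * c"], intro ballI allI)
      fix \<alpha> :: real and x \<xi> :: "real^'n" assume a: "\<alpha> \<in> {0<..1}" and x: "x \<in> K"
      have "norm (iter_deriv ds (g \<alpha>) (x, \<xi>)) \<le> Cf ds * M \<alpha> (x, \<xi>) * r \<alpha> (x, \<xi>) ^ length ds * jbr \<xi> powr (- real (nxi ds))"
        by (rule Cf[OF ds a x])
      also have "\<dots> \<le> \<bar>Cf ds\<bar> * (c * M' \<alpha> (x, \<xi>)) * r \<alpha> (x, \<xi>) ^ length ds * jbr \<xi> powr (- real (nxi ds))"
        using M[OF a x] r[OF a x] by (intro bound_mono_aux) auto
      finally show "norm (iter_deriv ds (g \<alpha>) (x, \<xi>)) \<le> \<bar>Cf ds\<bar> * c * M' \<alpha> (x, \<xi>) * r \<alpha> (x, \<xi>) ^ length ds * jbr \<xi> powr (- real (nxi ds))"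
        by (simp add: mult.assoc)
    qed
  qed
qed

lemma cls_linear:
  assumes L: "bounded_linear L" and Ln: "\<And>x. norm (L x) \<le> norm x" and g: "cls U K g M r"
  shows "cls U K (\<lambda>\<alpha> w. L (g \<alpha> w)) M r"
proof -
  obtain Cf where Cf: "\<And>ds \<alpha> x \<xi>. set ds \<subseteq> Dset \<Longrightarrow> \<alpha> \<in> {0<..1} \<Longrightarrow> x \<in> K \<Longrightarrow>
     norm (iter_deriv ds (g \<alpha>) (x, \<xi>)) \<le> Cf ds * M \<alpha> (x, \<xi>) * r \<alpha> (x, \<xi>) ^ length ds * jbr \<xi> powr (- real (nxi ds))"
    using cls_bound[OF g] by blast
  show ?thesis unfolding cls_def
  proof (intro conjI allI impI)
    fix \<alpha> :: real assume "\<alpha> > 0"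
    then show "smooth_on (U \<times> UNIV) (\<lambda>w. L (g \<alpha> w))"
      using smooth_linear_comp[OF L V_open cls_smooth[OF g]] by simp
  next
    fix ds :: "((real^'n) \<times> (real^'n)) list" assume ds: "set ds \<subseteq> Dset"
    show "\<exists>C. \<forall>\<alpha>\<in>{0<..1}. \<forall>x\<in>K. \<forall>\<xi>. norm (iter_deriv ds (\<lambda>w. L (g \<alpha> w)) (x, \<xi>)) \<le> C * M \<alpha> (x, \<xi>) * r \<alpha> (x, \<xi>) ^ length ds * jbr \<xi> powr (- real (nxi ds))"
    proof (rule exI[of _ "Cf ds"], intro ballI allI)
      fix \<alpha> :: real and x \<xi> :: "real^'n" assume a: "\<alpha> \<in> {0<..1}" and x: "x \<in> K"
      have xV: "(x, \<xi>) \<in> U \<times> UNIV" using x KU by auto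
      have sf: "smooth_on (U \<times> UNIV) (g \<alpha>)" using a cls_smooth[OF g] by auto
      have "iter_deriv ds (\<lambda>w. L (g \<alpha> w)) (x, \<xi>) = L (iter_deriv ds (g \<alpha>) (x, \<xi>))"
        by (rule iter_deriv_linear[OF L V_open _ xV]) (use sf in \<open>auto simp: smooth_on_def\<close>)
      then show "norm (iter_deriv ds (\<lambda>w. L (g \<alpha> w)) (x, \<xi>)) \<le> Cf ds * M \<alpha> (x, \<xi>) * r \<alpha> (x, \<xi>) ^ length ds * jbr \<xi> powr (- real (nxi ds))"
        using Ln[of "iter_deriv ds (g \<alpha>) (x, \<xi>)"] Cf[OF ds a x, of \<xi>] by simp
    qed
  qed
qed

lemma cls_zero: "cls U K (\<lambda>_ _. 0::'b::real_normed_vector) M r"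
  unfolding cls_def
proof (intro conjI allI impI)
  fix \<alpha> :: real show "smooth_on (U \<times> UNIV) (\<lambda>_. 0)" by (rule smooth_const)
next
  fix ds :: "((real^'n) \<times> (real^'n)) list"
  show "\<exists>C. \<forall>\<alpha>\<in>{0<..1}. \<forall>x\<in>K. \<forall>\<xi>. norm (iter_deriv ds (\<lambda>_. 0::'b) (x, \<xi>)) \<le> C * M \<alpha> (x, \<xi>) * r \<alpha> (x, \<xi>) ^ length ds * jbr \<xi> powr (- real (nxi ds))"
    by (intro exI[of _ 0]) (cases "ds = []", simp_all add: iter_deriv_const)
qed

lemma cls_sum:
  assumes "finite B" "\<And>b. b \<in> B \<Longrightarrow> cls U K (F b) M r"
  shows "cls U K (\<lambda>\<alpha> w. \<Sum>b\<in>B. F b \<alpha> w) M r"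
  using assms
proof (induction B rule: finite_induct)
  case empty then show ?case using cls_zero by simp
next
  case (insert b B)
  then have "cls U K (\<lambda>\<alpha> w. F b \<alpha> w + (\<Sum>b\<in>B. F b \<alpha> w)) M r"
    by (intro cls_add) auto
  then show ?case using insert by simp
qed

lemma cls_power:
  fixes f :: "real \<Rightarrow> (real^'n) \<times> (real^'n) \<Rightarrow> 'b::real_normed_algebra_1"
  assumes "cls U K f M r"
  shows "cls U K (\<lambda>\<alpha> w. f \<alpha> w ^ k) (\<lambda>\<alpha> w. M \<alpha> w ^ k) r"
proof (induction k)
  case 0 then show ?case using cls_const[of 1 r] by simp
next
  case (Suc k)
  then show ?case using cls_mult[OF assms Suc] by simp
qed

lemma cls_prod:
  fixes F :: "'i \<Rightarrow> real \<Rightarrow> (real^'n) \<times> (real^'n) \<Rightarrow> complex"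
  assumes "finite A" "\<And>i. i \<in> A \<Longrightarrow> cls U K (F i) (M i) r"
  shows "cls U K (\<lambda>\<alpha> w. \<Prod>i\<in>A. F i \<alpha> w) (\<lambda>\<alpha> w. \<Prod>i\<in>A. M i \<alpha> w) r"
  using assms
proof (induction A rule: finite_induct)
  case empty then show ?case using cls_const[of 1 r] by simp
next
  case (insert b B)
  then have "cls U K (\<lambda>\<alpha> w. F b \<alpha> w * (\<Prod>i\<in>B. F i \<alpha> w)) (\<lambda>\<alpha> w. M b \<alpha> w * (\<Prod>i\<in>B. M i \<alpha> w)) r"
    by (intro cls_mult) auto
  then show ?case using insert by simp
qed

lemma iter_deriv_fst: "iter_deriv vs (\<lambda>w. h (fst w)) = (\<lambda>w. iter_deriv (map fst vs) h (fst w))"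
proof (induction vs)
  case Nil then show ?case by simp
next
  case (Cons v vs)
  then show ?case by (simp add: dir_deriv_def)
qed

lemma smooth_fst:
  fixes h :: "real^'n \<Rightarrow> 'b::real_normed_vector"
  assumes U: "open U" and h: "smooth_on U h"
  shows "smooth_on (U \<times> (UNIV :: 'c::real_normed_vector set)) (\<lambda>w. h (fst w))"
  unfolding smooth_on_def
proof
  fix vs :: "((real^'n) \<times> 'c) list"
  have G: "iter_deriv (map fst vs) h differentiable_on U" using h by (simp add: smooth_on_def)
  have "(\<lambda>w. iter_deriv (map fst vs) h (fst w)) differentiable_on U \<times> (UNIV :: 'c set)"
  proof (rule differentiable_at_imp_differentiable_on)
    fix w :: "(real^'n) \<times> 'c" assume w: "w \<in> U \<times> UNIV"
    have "iter_deriv (map fst vs) h differentiable (at (fst w))"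
      using G w U unfolding differentiable_on_eq_differentiable_at[OF U] by auto
    moreover have "fst differentiable (at w)"
      using bounded_linear_imp_differentiable[OF bounded_linear_fst] .
    ultimately show "(\<lambda>w. iter_deriv (map fst vs) h (fst w)) differentiable (at w)"
      using differentiable_chain_at[of fst w] by (simp add: o_def)
  qed
  then show "iter_deriv vs (\<lambda>w. h (fst w)) differentiable_on U \<times> UNIV"
    by (simp add: iter_deriv_fst)
qed

lemma cls_fst:
  assumes h: "smooth_on U h" and Kc: "compact K"
  shows "cls U K (\<lambda>\<alpha> w. h (fst w)) (\<lambda>_ _. 1) (\<lambda>_ _. 1)"
  unfolding cls_def
proof (intro conjI allI impI)
  fix \<alpha> :: real
  show "smooth_on (U \<times> UNIV) (\<lambda>w. h (fst w))" by (rule smooth_fst[OF U h])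
next
  fix ds :: "((real^'n) \<times> (real^'n)) list" assume ds: "set ds \<subseteq> Dset"
  show "\<exists>C. \<forall>\<alpha>\<in>{0<..1}. \<forall>x\<in>K. \<forall>\<xi>. norm (iter_deriv ds (\<lambda>w. h (fst w)) (x, \<xi>)) \<le> C * 1 * 1 ^ length ds * jbr \<xi> powr (- real (nxi ds))"
  proof (cases "nxi ds = 0")
    case False
    then obtain v where "v \<in> set ds" "fst v = 0" unfolding nxi_def
      by (metis (mono_tags, lifting) filter_False length_0_conv)
    then have "0 \<in> set (map fst ds)" by force
    then show ?thesis by (intro exI[of _ 0]) (simp add: iter_deriv_fst iter_deriv_zero_dir)
  next
    case True
    have "continuous_on U (iter_deriv (map fst ds) h)"
      using h by (simp add: smooth_on_def differentiable_imp_continuous_on)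
    then have "compact (iter_deriv (map fst ds) h ` K)"
      using Kc KU by (meson compact_continuous_image continuous_on_subset)
    then obtain B where B: "\<forall>y\<in>iter_deriv (map fst ds) h ` K. norm y \<le> B"
      using compact_imp_bounded bounded_iff by metis
    show ?thesis using True B by (intro exI[of _ B]) (simp add: iter_deriv_fst)
  qed
qed

lemma cls_coord: "cls U K (\<lambda>\<alpha> w. complex_of_real (snd w $ i)) (\<lambda>\<alpha> w. jbr (snd w)) (\<lambda>_ _. 1)"
  unfolding cls_def
proof (intro conjI allI impI)
  define L where "L = (\<lambda>w::(real^'n) \<times> (real^'n). complex_of_real (snd w $ i))"
  have L: "bounded_linear L" unfolding L_def
    using bounded_linear_compose[OF bounded_linear_of_real bounded_linear_compose[OF bounded_linear_vec_nth[of i] bounded_linear_snd]]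
    by (simp add: o_def)
  fix \<alpha> :: real
  show "smooth_on (U \<times> UNIV) (\<lambda>w. complex_of_real (snd w $ i))"
    using smooth_bounded_linear[OF L] unfolding L_def .
next
  define L where "L = (\<lambda>w::(real^'n) \<times> (real^'n). complex_of_real (snd w $ i))"
  have L: "bounded_linear L" unfolding L_def
    using bounded_linear_compose[OF bounded_linear_of_real bounded_linear_compose[OF bounded_linear_vec_nth[of i] bounded_linear_snd]]
    by (simp add: o_def)
  have dL: "\<And>v. dir_deriv v L = (\<lambda>_. L v)"
    by (rule ext, rule dir_deriv_eq, rule bounded_linear_imp_has_derivative[OF L])
  fix ds :: "((real^'n) \<times> (real^'n)) list" assume ds: "set ds \<subseteq> Dset"
  have "\<exists>C. \<forall>\<alpha>\<in>{0<..1::real}. \<forall>x\<in>K. \<forall>\<xi>. norm (iter_deriv ds L (x, \<xi>)) \<le> C * jbr (snd (x, \<xi>)) * 1 ^ length ds * jbr \<xi> powr (- real (nxi ds))"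
  proof (cases ds rule: rev_cases)
    case Nil
    have "\<bar>\<xi> $ i\<bar> \<le> jbr \<xi>" for \<xi>
      using component_le_norm_cart[of \<xi> i] norm_le_jbr[of \<xi>] by linarith
    then show ?thesis using Nil by (intro exI[of _ 1]) (simp add: nxi_def L_def)
  next
    case (snoc ws v)
    show ?thesis
    proof (cases "ws = []")
      case False
      then show ?thesis using snoc by (intro exI[of _ 0]) (simp add: iter_deriv_append dL iter_deriv_const)
    next
      case True
      have vD: "v \<in> Dset" using ds snoc by auto
      have "norm (L v) \<le> jbr \<xi> * jbr \<xi> powr (- real (nxi [v]))" for \<xi>
      proof -
        from vD obtain j where "v = dx j \<or> v = dxi j" unfolding Dset_def by auto
        then show ?thesis
        proof
          assume "v = dx j"
          then have "L v = 0" by (simp add: L_def dx_def)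
          then show ?thesis using jbr_pos[of \<xi>] by simp
        next
          assume v: "v = dxi j"
          then have "nxi [v] = 1" by (simp add: nxi_def dxi_def)
          moreover have "norm (L v) \<le> 1" using v by (simp add: L_def dxi_def axis_def)
          ultimately show ?thesis using jbr_pos[of \<xi>] by (simp add: powr_minus field_simps)
        qed
      qed
      then show ?thesis using snoc True by (intro exI[of _ 1]) (auto simp: dL)
    qed
  qed
  then show "\<exists>C. \<forall>\<alpha>\<in>{0<..1::real}. \<forall>x\<in>K. \<forall>\<xi>. norm (iter_deriv ds (\<lambda>w. complex_of_real (snd w $ i)) (x, \<xi>)) \<le> C * jbr (snd (x, \<xi>)) * 1 ^ length ds * jbr \<xi> powr (- real (nxi ds))"
    unfolding L_def .
qed

end


section \<open>The symbol p and s\<close>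

lemma finite_mi: "finite {\<beta>::'n::finite \<Rightarrow> nat. mi_len \<beta> \<le> m}"
proof -
  have "finite {\<beta>::'n \<Rightarrow> nat. \<forall>x. (x \<in> UNIV \<longrightarrow> \<beta> x \<in> {..m}) \<and> (x \<notin> UNIV \<longrightarrow> \<beta> x = 0)}"
    by (rule finite_set_of_finite_funs) auto
  moreover have "{\<beta>::'n \<Rightarrow> nat. mi_len \<beta> \<le> m} \<subseteq> {\<beta>. \<forall>x. (x \<in> UNIV \<longrightarrow> \<beta> x \<in> {..m}) \<and> (x \<notin> UNIV \<longrightarrow> \<beta> x = 0)}"
  proof
    fix \<beta> :: "'n \<Rightarrow> nat" assume "\<beta> \<in> {\<beta>. mi_len \<beta> \<le> m}"
    then have "\<beta> x \<le> m" for x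
      using member_le_sum[of x UNIV \<beta>] by (simp add: mi_len_def)
    then show "\<beta> \<in> {\<beta>. \<forall>x. (x \<in> UNIV \<longrightarrow> \<beta> x \<in> {..m}) \<and> (x \<notin> UNIV \<longrightarrow> \<beta> x = 0)}" by auto
  qed
  ultimately show ?thesis by (rule finite_subset[rotated])
qed

definition qq :: "nat \<Rightarrow> (('n::finite \<Rightarrow> nat) \<Rightarrow> real^'n \<Rightarrow> complex) \<Rightarrow> complex \<Rightarrow> (real^'n) \<times> (real^'n) \<Rightarrow> complex" where
  "qq m a z w = symb m a (fst w) (snd w) - z"

definition ss :: "nat \<Rightarrow> (('n::finite \<Rightarrow> nat) \<Rightarrow> real^'n \<Rightarrow> complex) \<Rightarrow> complex \<Rightarrow> (real^'n) \<times> (real^'n) \<Rightarrow> real" where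
  "ss m a z w = (cmod (qq m a z w))\<^sup>2"

definition HH :: "nat \<Rightarrow> (('n::finite \<Rightarrow> nat) \<Rightarrow> real^'n \<Rightarrow> complex) \<Rightarrow> complex \<Rightarrow> real \<Rightarrow> real \<Rightarrow> (real^'n) \<times> (real^'n) \<Rightarrow> real" where
  "HH m a z l \<alpha> w = (1 + ss m a z w / \<alpha>) powr l"

context
  fixes U K :: "(real^'n::finite) set" and m :: nat and a :: "('n \<Rightarrow> nat) \<Rightarrow> real^'n \<Rightarrow> complex" and z :: complex
  assumes U: "open U" and Kc: "compact K" and KU: "K \<subseteq> U"
    and sm: "\<And>\<beta>. mi_len \<beta> \<le> m \<Longrightarrow> smooth_on U (a \<beta>)"
begin

lemma cls_monom: "cls U K (\<lambda>\<alpha> w. monom (snd w) \<beta>) (\<lambda>\<alpha> w. jbr (snd w) ^ mi_len \<beta>) (\<lambda>_ _. 1)"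
proof -
  have "cls U K (\<lambda>\<alpha> w. \<Prod>i\<in>UNIV. complex_of_real (snd w $ i) ^ \<beta> i) (\<lambda>\<alpha> w. \<Prod>i\<in>UNIV. jbr (snd w) ^ \<beta> i) (\<lambda>_ _. 1)"
    by (intro cls_prod[OF U KU] cls_power[OF U KU] cls_coord[OF U KU]) auto
  then show ?thesis by (simp add: monom_def mi_len_def power_sum)
qed

lemma cls_symb: "cls U K (\<lambda>\<alpha> w. symb m a (fst w) (snd w) - z) (\<lambda>\<alpha> w. jbr (snd w) ^ m) (\<lambda>_ _. 1)"
proof -
  have t: "cls U K (\<lambda>\<alpha> w. a \<beta> (fst w) * monom (snd w) \<beta>) (\<lambda>\<alpha> w. jbr (snd w) ^ m) (\<lambda>_ _. 1)"
    if b: "\<beta> \<in> {\<beta>. mi_len \<beta> \<le> m}" for \<beta>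
  proof -
    have c: "cls U K (\<lambda>\<alpha> w. a \<beta> (fst w) * monom (snd w) \<beta>) (\<lambda>\<alpha> w. 1 * jbr (snd w) ^ mi_len \<beta>) (\<lambda>_ _. 1)"
      by (rule cls_mult[OF U KU cls_fst[OF U KU sm Kc] cls_monom]) (use b in auto)
    have le: "jbr \<xi> ^ mi_len \<beta> \<le> 1 * jbr \<xi> ^ m" for \<xi>
      using b jbr_ge1[of \<xi>] by (simp add: power_increasing)
    show ?thesis
      by (rule cls_mono[OF U KU c, where c=1]) (use le zero_le_power[OF less_imp_le[OF jbr_pos]] in auto)
  qed
  have "cls U K (\<lambda>\<alpha> w. \<Sum>\<beta>\<in>{\<beta>. mi_len \<beta> \<le> m}. a \<beta> (fst w) * monom (snd w) \<beta>) (\<lambda>\<alpha> w. jbr (snd w) ^ m) (\<lambda>_ _. 1)"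
    by (rule cls_sum[OF U KU finite_mi t])
  moreover have "cls U K (\<lambda>\<alpha> w. - z) (\<lambda>\<alpha> w. jbr (snd w) ^ m) (\<lambda>_ _. 1)"
    by (rule cls_mono[OF U KU cls_const[OF U KU], where c=1])
       (auto simp: jbr_ge1 one_le_power)
  ultimately have "cls U K (\<lambda>\<alpha> w. (\<Sum>\<beta>\<in>{\<beta>. mi_len \<beta> \<le> m}. a \<beta> (fst w) * monom (snd w) \<beta>) + - z) (\<lambda>\<alpha> w. jbr (snd w) ^ m) (\<lambda>_ _. 1)"
    by (rule cls_add[OF U KU])
  then show ?thesis by (simp add: symb_def)
qed

lemma cls_qq: "cls U K (\<lambda>\<alpha>. qq m a z) (\<lambda>\<alpha> w. jbr (snd w) ^ m) (\<lambda>_ _. 1)"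
  using cls_symb unfolding qq_def .

lemma cls_ss: "cls U K (\<lambda>\<alpha> w. Re (qq m a z w) * Re (qq m a z w) + Im (qq m a z w) * Im (qq m a z w)) (\<lambda>\<alpha> w. jbr (snd w) ^ m * jbr (snd w) ^ m) (\<lambda>_ _. 1)"
proof -
  have r: "cls U K (\<lambda>\<alpha> w. Re (qq m a z w)) (\<lambda>\<alpha> w. jbr (snd w) ^ m) (\<lambda>_ _. 1)"
    by (rule cls_linear[OF U KU bounded_linear_Re _ cls_qq]) (simp add: abs_Re_le_cmod)
  have i: "cls U K (\<lambda>\<alpha> w. Im (qq m a z w)) (\<lambda>\<alpha> w. jbr (snd w) ^ m) (\<lambda>_ _. 1)"
    by (rule cls_linear[OF U KU bounded_linear_Im _ cls_qq]) (simp add: abs_Im_le_cmod)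
  show ?thesis
    by (rule cls_add[OF U KU cls_mult[OF U KU r r] cls_mult[OF U KU i i]])
qed

end


context
  fixes U K :: "(real^'n::finite) set" and m :: nat and a :: "('n \<Rightarrow> nat) \<Rightarrow> real^'n \<Rightarrow> complex" and z :: complex
  assumes U: "open U" and Kc: "compact K" and KU: "K \<subseteq> U"
    and sm: "\<And>\<beta>. mi_len \<beta> \<le> m \<Longrightarrow> smooth_on U (a \<beta>)"
begin

lemma cls_ss': "cls U K (\<lambda>\<alpha>. (ss m a z)) (\<lambda>\<alpha> w. jbr (snd w) ^ m * jbr (snd w) ^ m) (\<lambda>_ _. 1)"
proof -
  have eq: "(\<lambda>\<alpha>. (ss m a z)) = (\<lambda>\<alpha> w. Re (qq m a z w) * Re (qq m a z w) + Im (qq m a z w) * Im (qq m a z w))"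
    by (intro ext, simp only: ss_def cmod_power2, simp only: power2_eq_square)
  show ?thesis unfolding eq by (rule cls_ss[of U K m a z, OF U Kc KU sm])
qed

lemma ss_smooth: "smooth_on (U \<times> UNIV) (ss m a z)"
  using cls_smooth[OF U KU cls_ss', of 1] by simp

lemma ss_nonneg: "0 \<le> (ss m a z) w"
  by (simp add: ss_def)

lemma ss_has_deriv:
  assumes "w \<in> U \<times> UNIV"
  obtains S' where "((ss m a z) has_derivative S') (at w)"
proof -
  have "(ss m a z) differentiable_on U \<times> UNIV" using ss_smooth unfolding smooth_on_def
    by (metis iter_deriv.simps(1))
  then have "(ss m a z) differentiable (at w)"
    using assms unfolding differentiable_on_eq_differentiable_at[OF V_open[OF U KU]] by blast
  then show ?thesis using that unfolding differentiable_def by blast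
qed

lemma HH_has_deriv:
  assumes a: "\<alpha> > 0" and S': "((ss m a z) has_derivative S') (at w)"
  shows "((HH m a z) l \<alpha> has_derivative (\<lambda>h. (1 + (ss m a z) w / \<alpha>) powr l * (0 * ln (1 + (ss m a z) w / \<alpha>) + (S' h / \<alpha>) * l / (1 + (ss m a z) w / \<alpha>)))) (at w)"
proof -
  have g: "((\<lambda>w. 1 + (ss m a z) w / \<alpha>) has_derivative (\<lambda>h. S' h / \<alpha>)) (at w)"
    using S' a by (auto intro!: derivative_eq_intros)
  have pos: "0 < 1 + (ss m a z) w / \<alpha>" using a ss_nonneg[of w] by (simp add: add_pos_nonneg)
  have h: "((\<lambda>w. (1 + (ss m a z) w / \<alpha>) powr l) has_derivative (\<lambda>h. (1 + (ss m a z) w / \<alpha>) powr l * (0 * ln (1 + (ss m a z) w / \<alpha>) + (S' h / \<alpha>) * l / (1 + (ss m a z) w / \<alpha>)))) (at w)"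
    using has_derivative_powr[where g="\<lambda>w. 1 + (ss m a z) w / \<alpha>" and g'="\<lambda>h. S' h / \<alpha>" and f="\<lambda>_. l" and f'="\<lambda>_. 0" and x=w and X=UNIV,
        OF g has_derivative_const pos] by simp
  show ?thesis unfolding HH_def by (rule h)
qed

lemma HH_deriv:
  assumes a: "\<alpha> > 0" and w: "w \<in> U \<times> UNIV"
  shows "dir_deriv v ((HH m a z) l \<alpha>) w = (l / \<alpha>) * ((HH m a z) (l - 1) \<alpha> w * dir_deriv v (ss m a z) w)"
proof -
  obtain S' where S': "((ss m a z) has_derivative S') (at w)" using ss_has_deriv[OF w] by blast
  have pos: "0 < 1 + (ss m a z) w / \<alpha>" using a ss_nonneg[of w] by (simp add: add_pos_nonneg)
  define X where "X = 1 + (ss m a z) w / \<alpha>"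
  have Xp: "X > 0" using pos X_def by simp
  have d1: "dir_deriv v ((HH m a z) l \<alpha>) w = X powr l * (0 * ln X + (S' v / \<alpha>) * l / X)"
    using dir_deriv_eq[OF HH_has_deriv[OF a S']] X_def by simp
  have d2: "(HH m a z) (l - 1) \<alpha> w = X powr (l - 1)" by (simp add: HH_def X_def)
  have "X powr l = X powr ((l - 1) + 1)" by simp
  also have "\<dots> = X powr (l - 1) * X powr 1" by (rule powr_add)
  also have "\<dots> = X powr (l - 1) * X" using Xp by simp
  finally have eX: "X powr l = X powr (l - 1) * X" .
  show ?thesis
    unfolding d1 d2 dir_deriv_eq[OF S'] eX using Xp a by (simp add: field_simps)
qed

lemma HH_smooth_aux:
  assumes a: "\<alpha> > 0"
  shows "\<forall>l vs. length vs \<le> k \<longrightarrow> iter_deriv vs ((HH m a z) l \<alpha>) differentiable_on U \<times> UNIV"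
proof (induction k)
  case 0
  have "(HH m a z) l \<alpha> differentiable_on U \<times> UNIV" for l
  proof (rule differentiable_at_imp_differentiable_on)
    fix w :: "(real^'n) \<times> (real^'n)" assume w: "w \<in> U \<times> UNIV"
    obtain S' where S': "((ss m a z) has_derivative S') (at w)" using ss_has_deriv[OF w] by blast
    show "(HH m a z) l \<alpha> differentiable (at w)"
      using HH_has_deriv[OF a S'] unfolding differentiable_def by blast
  qed
  then show ?case by simp
next
  case (Suc k)
  show ?case
  proof (intro allI impI)
    fix l and vs :: "((real^'n) \<times> (real^'n)) list" assume len: "length vs \<le> Suc k"
    show "iter_deriv vs ((HH m a z) l \<alpha>) differentiable_on U \<times> UNIV"
    proof (cases vs rule: rev_cases)
      case Nil then show ?thesis using Suc.IH[rule_format, of "[]" l] by simp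
    next
      case (snoc ws v)
      have lw: "length ws \<le> k" using len snoc by simp
      let ?P = "\<lambda>w. (HH m a z) (l - 1) \<alpha> w * dir_deriv v (ss m a z) w"
      have dP: "iter_deriv b ?P differentiable_on U \<times> UNIV" if "length b \<le> length ws" for b
      proof (rule leibniz_diff[OF V_open[OF U KU]])
        fix c :: "((real^'n) \<times> (real^'n)) list" assume "length c \<le> length b"
        then show "iter_deriv c ((HH m a z) (l - 1) \<alpha>) differentiable_on U \<times> UNIV"
          using Suc.IH lw that by (meson order_trans)
      next
        fix c :: "((real^'n) \<times> (real^'n)) list"
        have "iter_deriv (c @ [v]) (ss m a z) differentiable_on U \<times> UNIV"
          using ss_smooth unfolding smooth_on_def by blast
        then show "iter_deriv c (dir_deriv v (ss m a z)) differentiable_on U \<times> UNIV"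
          by (simp add: iter_deriv_append)
      qed
      have "iter_deriv ws (\<lambda>w. (l / \<alpha>) * ?P w) differentiable_on U \<times> UNIV"
        by (rule iter_deriv_linear_diff[OF bounded_linear_mult_right V_open[OF U KU] dP])
      moreover have "\<And>y. y \<in> U \<times> UNIV \<Longrightarrow> iter_deriv ws (\<lambda>w. (l / \<alpha>) * ?P w) y = iter_deriv vs ((HH m a z) l \<alpha>) y"
        unfolding snoc iter_deriv_append
        by (rule iter_deriv_cong[OF V_open[OF U KU]]) (simp_all add: HH_deriv[OF a])
      ultimately show ?thesis by (rule differentiable_on_cong_open[OF V_open[OF U KU]])
    qed
  qed
qed

lemma HH_smooth: "\<alpha> > 0 \<Longrightarrow> smooth_on (U \<times> UNIV) ((HH m a z) l \<alpha>)"
  unfolding smooth_on_def using HH_smooth_aux by blast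

end


lemma core_common:
  fixes \<alpha> s h h1 R :: real
  assumes \<alpha>: "0 < \<alpha>" and s: "0 \<le> s" and h1: "h1 = h * \<alpha> / (\<alpha> + s)"
    and R: "R = sqrt ((1 + s) / (\<alpha> + s))"
  shows "h1 / \<alpha> = h / (\<alpha> + s)" "R\<^sup>2 = (1 + s) / (\<alpha> + s)" "0 \<le> R"
    "\<alpha> \<le> 1 \<Longrightarrow> 1 \<le> R"
proof -
  show "h1 / \<alpha> = h / (\<alpha> + s)" using \<alpha> s h1 by (simp add: field_simps)
  show "R\<^sup>2 = (1 + s) / (\<alpha> + s)" using R \<alpha> s by simp
  show "0 \<le> R" using R \<alpha> s by simp
  assume "\<alpha> \<le> 1"
  then have "1 \<le> (1 + s) / (\<alpha> + s)" using \<alpha> s by (simp add: field_simps)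
  then show "1 \<le> R" using R by simp
qed

lemma core_nil:
  fixes l \<alpha> s h h1 R J A S Ca Cq Ce qv Q jm :: real and ka na nv :: nat
  assumes \<alpha>: "0 < \<alpha>" and s: "0 \<le> s" and h: "0 \<le> h" and h1: "h1 = h * \<alpha> / (\<alpha> + s)"
    and R: "R = sqrt ((1 + s) / (\<alpha> + s))" and J: "0 < J" and jm: "0 \<le> jm" and Ce: "0 < Ce"
    and E: "jm * jm \<le> Ce * (1 + s)" and qv: "qv = sqrt s"
    and A: "\<bar>A\<bar> \<le> Ca * h1 * R ^ ka * J powr (- real na)"
    and S: "\<bar>S\<bar> \<le> 2 * qv * Q" and Q: "Q \<le> Cq * jm * J powr (- real nv)"
  shows "\<bar>l / \<alpha> * (A * S)\<bar> \<le> \<bar>l\<bar> * \<bar>Ca\<bar> * (2 * \<bar>Cq\<bar> * sqrt Ce) * h * R ^ (ka + 1) * J powr (- real (na + nv))"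
proof -
  note cc = core_common[OF \<alpha> s h1 R]
  have as: "0 < \<alpha> + s" using \<alpha> s by simp
  have h10: "0 \<le> h1" using h1 h \<alpha> as by simp
  define Ja where "Ja = J powr (- real na)"
  define Jv where "Jv = J powr (- real nv)"
  have Ja0: "0 \<le> Ja" "0 \<le> Jv" unfolding Ja_def Jv_def by simp_all
  have JJ: "J powr (- real (na + nv)) = Ja * Jv" unfolding Ja_def Jv_def
    by (simp add: powr_add[symmetric])
  have Rk: "0 \<le> R ^ ka" using cc(3) by simp
  define a0 where "a0 = \<bar>Ca\<bar> * h1 * R ^ ka * Ja"
  have a0: "\<bar>A\<bar> \<le> a0" "0 \<le> a0"
  proof -
    have "Ca * h1 * R ^ ka * Ja \<le> \<bar>Ca\<bar> * h1 * R ^ ka * Ja"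
      using h10 Rk Ja0 by (intro mult_right_mono) (auto simp: mult_nonneg_nonneg)
    then show "\<bar>A\<bar> \<le> a0" using A unfolding a0_def Ja_def by linarith
    show "0 \<le> a0" unfolding a0_def using h10 Rk Ja0 by simp
  qed
  have qv0: "0 \<le> qv" using qv s by simp
  have Q0: "Q \<le> \<bar>Cq\<bar> * jm * Jv" using Q jm Ja0 unfolding Jv_def
    by (smt (verit) abs_ge_self mult_right_mono mult_nonneg_nonneg)
  define s0 where "s0 = 2 * qv * (\<bar>Cq\<bar> * jm * Jv)"
  have s0: "\<bar>S\<bar> \<le> s0"
  proof -
    have "2 * qv * Q \<le> 2 * qv * (\<bar>Cq\<bar> * jm * Jv)" using Q0 qv0 by (intro mult_left_mono) auto
    then show ?thesis using S unfolding s0_def by linarith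
  qed
  have key: "qv * jm / (\<alpha> + s) \<le> sqrt Ce * R"
  proof -
    have q1: "qv \<le> sqrt (\<alpha> + s)" using qv \<alpha> by simp
    have "jm = sqrt (jm * jm)" using jm by simp
    also have "\<dots> \<le> sqrt (Ce * (1 + s))" using E by (rule real_sqrt_le_mono)
    finally have j1: "jm \<le> sqrt Ce * sqrt (1 + s)" by (simp add: real_sqrt_mult)
    have "qv * jm \<le> sqrt (\<alpha> + s) * (sqrt Ce * sqrt (1 + s))"
      using q1 j1 qv0 jm as by (intro mult_mono) auto
    then have "qv * jm / (\<alpha> + s) \<le> sqrt (\<alpha> + s) * (sqrt Ce * sqrt (1 + s)) / (\<alpha> + s)"
      using as by (intro divide_right_mono) auto
    also have "\<dots> = sqrt Ce * (sqrt (1 + s) / sqrt (\<alpha> + s))"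
    proof -
      have "sqrt (\<alpha> + s) * sqrt (\<alpha> + s) = \<alpha> + s" using as by simp
      then show ?thesis using as by (simp add: field_simps)
    qed
    also have "\<dots> = sqrt Ce * R" using R by (simp add: real_sqrt_divide)
    finally show ?thesis .
  qed
  have "\<bar>l / \<alpha> * (A * S)\<bar> = \<bar>l\<bar> / \<alpha> * (\<bar>A\<bar> * \<bar>S\<bar>)" using \<alpha> by (simp add: abs_mult)
  also have "\<dots> \<le> \<bar>l\<bar> / \<alpha> * (a0 * s0)"
    using a0 s0 \<alpha> by (intro mult_left_mono mult_mono) auto
  also have "\<dots> = \<bar>l\<bar> * \<bar>Ca\<bar> * (2 * \<bar>Cq\<bar>) * (h1 / \<alpha>) * (qv * jm) * R ^ ka * Ja * Jv"
    unfolding a0_def s0_def by (simp add: field_simps)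
  also have "\<dots> = \<bar>l\<bar> * \<bar>Ca\<bar> * (2 * \<bar>Cq\<bar>) * h * (qv * jm / (\<alpha> + s)) * R ^ ka * Ja * Jv"
    unfolding cc(1) by (simp add: field_simps)
  also have "\<dots> \<le> \<bar>l\<bar> * \<bar>Ca\<bar> * (2 * \<bar>Cq\<bar>) * h * (sqrt Ce * R) * R ^ ka * Ja * Jv"
    using key h Rk Ja0 by (intro mult_right_mono mult_left_mono) (auto simp: mult_nonneg_nonneg)
  also have "\<dots> = \<bar>l\<bar> * \<bar>Ca\<bar> * (2 * \<bar>Cq\<bar> * sqrt Ce) * h * R ^ (ka + 1) * J powr (- real (na + nv))"
    unfolding JJ by (simp add: field_simps)
  finally show ?thesis .
qed

lemma core_cons:
  fixes l \<alpha> s h h1 R J A S Ca Cs Ce jm :: real and ka kb na nb :: nat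
  assumes \<alpha>: "0 < \<alpha>" "\<alpha> \<le> 1" and s: "0 \<le> s" and h: "0 \<le> h" and h1: "h1 = h * \<alpha> / (\<alpha> + s)"
    and R: "R = sqrt ((1 + s) / (\<alpha> + s))" and J: "0 < J" and jm: "0 \<le> jm" and Ce: "0 < Ce"
    and E: "jm * jm \<le> Ce * (1 + s)" and kb: "2 \<le> kb"
    and A: "\<bar>A\<bar> \<le> Ca * h1 * R ^ ka * J powr (- real na)"
    and S: "\<bar>S\<bar> \<le> Cs * (jm * jm) * J powr (- real nb)"
  shows "\<bar>l / \<alpha> * (A * S)\<bar> \<le> \<bar>l\<bar> * \<bar>Ca\<bar> * (\<bar>Cs\<bar> * Ce) * h * R ^ (ka + kb) * J powr (- real (na + nb))"
proof -
  note cc = core_common[OF \<alpha>(1) s h1 R]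
  have as: "0 < \<alpha> + s" using \<alpha> s by simp
  have h10: "0 \<le> h1" using h1 h \<alpha> as by simp
  define Ja where "Ja = J powr (- real na)"
  define Jb where "Jb = J powr (- real nb)"
  have Ja0: "0 \<le> Ja" "0 \<le> Jb" unfolding Ja_def Jb_def by simp_all
  have JJ: "J powr (- real (na + nb)) = Ja * Jb" unfolding Ja_def Jb_def
    by (simp add: powr_add[symmetric])
  have Rk: "0 \<le> R ^ ka" using cc(3) by simp
  define a0 where "a0 = \<bar>Ca\<bar> * h1 * R ^ ka * Ja"
  have a0: "\<bar>A\<bar> \<le> a0" "0 \<le> a0"
  proof -
    have "Ca * h1 * R ^ ka * Ja \<le> \<bar>Ca\<bar> * h1 * R ^ ka * Ja"
      using h10 Rk Ja0 by (intro mult_right_mono) (auto simp: mult_nonneg_nonneg)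
    then show "\<bar>A\<bar> \<le> a0" using A unfolding a0_def Ja_def by linarith
    show "0 \<le> a0" unfolding a0_def using h10 Rk Ja0 by simp
  qed
  define s0 where "s0 = \<bar>Cs\<bar> * (jm * jm) * Jb"
  have s0: "\<bar>S\<bar> \<le> s0"
  proof -
    have "Cs * (jm * jm) * Jb \<le> \<bar>Cs\<bar> * (jm * jm) * Jb"
      using jm Ja0 by (intro mult_right_mono) (auto simp: mult_nonneg_nonneg)
    then show ?thesis using S unfolding s0_def Jb_def by linarith
  qed
  have key: "jm * jm / (\<alpha> + s) \<le> Ce * R ^ kb"
  proof -
    have "jm * jm / (\<alpha> + s) \<le> Ce * (1 + s) / (\<alpha> + s)" using E as by (intro divide_right_mono) auto
    also have "\<dots> = Ce * R\<^sup>2" using cc(2) by simp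
    also have "R\<^sup>2 \<le> R ^ kb" using cc(4)[OF \<alpha>(2)] kb by (intro power_increasing) auto
    then have "Ce * R\<^sup>2 \<le> Ce * R ^ kb" using Ce by simp
    finally show ?thesis .
  qed
  have "\<bar>l / \<alpha> * (A * S)\<bar> = \<bar>l\<bar> / \<alpha> * (\<bar>A\<bar> * \<bar>S\<bar>)" using \<alpha> by (simp add: abs_mult)
  also have "\<dots> \<le> \<bar>l\<bar> / \<alpha> * (a0 * s0)"
    using a0 s0 \<alpha> by (intro mult_left_mono mult_mono) auto
  also have "\<dots> = \<bar>l\<bar> * \<bar>Ca\<bar> * \<bar>Cs\<bar> * (h1 / \<alpha>) * (jm * jm) * R ^ ka * Ja * Jb"
    unfolding a0_def s0_def by (simp add: field_simps)
  also have "\<dots> = \<bar>l\<bar> * \<bar>Ca\<bar> * \<bar>Cs\<bar> * h * (jm * jm / (\<alpha> + s)) * R ^ ka * Ja * Jb"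
    unfolding cc(1) by (simp add: field_simps)
  also have "\<dots> \<le> \<bar>l\<bar> * \<bar>Ca\<bar> * \<bar>Cs\<bar> * h * (Ce * R ^ kb) * R ^ ka * Ja * Jb"
    using key h Rk Ja0 by (intro mult_right_mono mult_left_mono) (auto simp: mult_nonneg_nonneg)
  also have "\<dots> = \<bar>l\<bar> * \<bar>Ca\<bar> * (\<bar>Cs\<bar> * Ce) * h * R ^ (ka + kb) * J powr (- real (na + nb))"
    unfolding JJ by (simp add: field_simps power_add)
  finally show ?thesis .
qed

lemma ell_arith:
  fixes t N qv pr zz A C0 :: real
  assumes m: "m \<ge> 1" and t1: "t \<ge> 1" and N0: "N \<ge> 0" and tN: "t\<^sup>2 = 1 + N\<^sup>2"
    and qv: "qv \<ge> 0" and zz: "zz \<ge> 0" and A: "A \<ge> 0" and C0: "C0 > 0"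
    and e1: "N ^ m / C0 \<le> pr" and e2: "pr \<le> qv + zz + A * t ^ (m - 1)"
  shows "t ^ m \<le> (max 2 (2 ^ (m + 1) * C0 * A)) ^ m + 2 ^ (m + 1) * C0 * (1 + zz) * (1 + qv)"
proof -
  define T0 where "T0 = max 2 (2 ^ (m + 1) * C0 * A)"
  have sec: "0 \<le> 2 ^ (m + 1) * C0 * (1 + zz) * (1 + qv)" using C0 zz qv by simp
  have "t ^ m \<le> T0 ^ m + 2 ^ (m + 1) * C0 * (1 + zz) * (1 + qv)"
  proof (cases "t < T0")
    case True
    then have "t ^ m \<le> T0 ^ m" using t1 by (intro power_mono) auto
    then show ?thesis using sec by linarith
  next
    case False
    then have t2: "t \<ge> 2" and tA: "2 ^ (m + 1) * C0 * A \<le> t" unfolding T0_def by auto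
    have "4 \<le> t * t" using t2 mult_mono[of 2 t 2 t] by simp
    then have "(t / 2)\<^sup>2 \<le> N\<^sup>2" using tN by (simp add: power2_eq_square)
    then have tN2: "t / 2 \<le> N" using N0 by (rule power2_le_imp_le)
    have "(t / 2) ^ m \<le> N ^ m" using tN2 t1 by (intro power_mono) auto
    then have "t ^ m \<le> 2 ^ m * N ^ m" by (simp add: power_divide field_simps)
    also have "N ^ m \<le> C0 * pr" using e1 C0 by (simp add: field_simps)
    then have "2 ^ m * N ^ m \<le> 2 ^ m * (C0 * pr)" by simp
    also have "\<dots> \<le> 2 ^ m * (C0 * (qv + zz + A * t ^ (m - 1)))"
      using e2 C0 by (intro mult_left_mono) auto
    finally have i1: "t ^ m \<le> 2 ^ m * C0 * (qv + zz) + 2 ^ m * C0 * A * t ^ (m - 1)"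
      by (simp add: algebra_simps)
    have tm: "t ^ m = t * t ^ (m - 1)" using m by (metis One_nat_def Suc_pred less_le_trans power_Suc zero_less_one)
    have "2 ^ (m + 1) * C0 * A * t ^ (m - 1) \<le> t * t ^ (m - 1)"
      using tA t1 by (intro mult_right_mono) auto
    then have "2 ^ m * C0 * A * t ^ (m - 1) \<le> t ^ m / 2" unfolding tm by simp
    with i1 have f1: "t ^ m \<le> 2 ^ (m + 1) * C0 * (qv + zz)" by simp
    have f2: "qv + zz \<le> (1 + zz) * (1 + qv)" using qv zz by (simp add: algebra_simps)
    have "2 ^ (m + 1) * C0 * (qv + zz) \<le> 2 ^ (m + 1) * C0 * ((1 + zz) * (1 + qv))"
      using f2 C0 by (intro mult_left_mono) auto
    then have f3: "2 ^ (m + 1) * C0 * (qv + zz) \<le> 2 ^ (m + 1) * C0 * (1 + zz) * (1 + qv)"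
      by (simp only: mult.assoc)
    have "0 \<le> T0 ^ m" unfolding T0_def by simp
    then show ?thesis using f1 f3 by linarith
  qed
  then show ?thesis unfolding T0_def .
qed

context
  fixes U K :: "(real^'n::finite) set" and m :: nat and a :: "('n \<Rightarrow> nat) \<Rightarrow> real^'n \<Rightarrow> complex" and z :: complex
  assumes U: "open U" and Kc: "compact K" and KU: "K \<subseteq> U"
    and sm: "\<And>\<beta>. mi_len \<beta> \<le> m \<Longrightarrow> smooth_on U (a \<beta>)"
    and ell: "\<exists>C>0. \<forall>x\<in>K. \<forall>\<xi>. norm (princ m a x \<xi>) \<ge> (norm \<xi>) ^ m / C"
begin

lemma lower_bound:
  obtains A where "A \<ge> 0" "\<And>x \<xi>. x \<in> K \<Longrightarrow> norm (symb m a x \<xi> - princ m a x \<xi>) \<le> A * jbr \<xi> ^ (m - 1)"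
proof -
  define B' where "B' = {\<beta>::'n \<Rightarrow> nat. mi_len \<beta> \<le> m \<and> mi_len \<beta> \<noteq> m}"
  have fB': "finite B'" unfolding B'_def by (rule finite_subset[OF _ finite_mi[of m]]) auto
  have t: "cls U K (\<lambda>\<alpha> w. a \<beta> (fst w) * monom (snd w) \<beta>) (\<lambda>\<alpha> w. jbr (snd w) ^ (m - 1)) (\<lambda>_ _. 1)"
    if b: "\<beta> \<in> B'" for \<beta>
  proof -
    have b': "mi_len \<beta> \<le> m" using b by (simp add: B'_def)
    have c: "cls U K (\<lambda>\<alpha> w. a \<beta> (fst w) * monom (snd w) \<beta>) (\<lambda>\<alpha> w. 1 * jbr (snd w) ^ mi_len \<beta>) (\<lambda>_ _. 1)"
      by (rule cls_mult[OF U KU cls_fst[OF U KU sm[OF b'] Kc] cls_monom[OF U Kc KU sm]])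
    have le: "jbr \<xi> ^ mi_len \<beta> \<le> 1 * jbr \<xi> ^ (m - 1)" for \<xi> :: "real^'n"
      using b jbr_ge1[of \<xi>] by (simp, intro power_increasing) (auto simp: B'_def)
    show ?thesis
      by (rule cls_mono[OF U KU c, where c=1]) (use le zero_le_power[OF less_imp_le[OF jbr_pos]] in auto)
  qed
  have "cls U K (\<lambda>\<alpha> w. \<Sum>\<beta>\<in>B'. a \<beta> (fst w) * monom (snd w) \<beta>) (\<lambda>\<alpha> w. jbr (snd w) ^ (m - 1)) (\<lambda>_ _. 1)"
    by (rule cls_sum[OF U KU fB' t])
  then obtain Cf where Cf: "\<And>ds (\<alpha>::real) x (\<xi>::real^'n). set ds \<subseteq> Dset \<Longrightarrow> \<alpha> \<in> {0<..1} \<Longrightarrow> x \<in> K \<Longrightarrow>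
     norm (iter_deriv ds (\<lambda>w. \<Sum>\<beta>\<in>B'. a \<beta> (fst w) * monom (snd w) \<beta>) (x, \<xi>)) \<le> Cf ds * jbr (snd (x, \<xi>)) ^ (m - 1) * 1 ^ length ds * jbr \<xi> powr (- real (nxi ds))"
    by (rule cls_bound[OF U KU]) blast
  have split: "symb m a x \<xi> - princ m a x \<xi> = (\<Sum>\<beta>\<in>B'. a \<beta> x * monom \<xi> \<beta>)" for x \<xi>
  proof -
    have e: "{\<beta>::'n \<Rightarrow> nat. mi_len \<beta> \<le> m} = {\<beta>. mi_len \<beta> = m} \<union> B'" by (auto simp: B'_def)
    have f: "finite {\<beta>::'n \<Rightarrow> nat. mi_len \<beta> = m}" by (rule finite_subset[OF _ finite_mi[of m]]) auto
    have "(\<Sum>\<beta>\<in>{\<beta>::'n \<Rightarrow> nat. mi_len \<beta> \<le> m}. a \<beta> x * monom \<xi> \<beta>) =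
        (\<Sum>\<beta>\<in>{\<beta>. mi_len \<beta> = m}. a \<beta> x * monom \<xi> \<beta>) + (\<Sum>\<beta>\<in>B'. a \<beta> x * monom \<xi> \<beta>)"
      unfolding e by (rule sum.union_disjoint[OF f fB']) (auto simp: B'_def)
    then show ?thesis unfolding symb_def princ_def by simp
  qed
  have "norm (symb m a x \<xi> - princ m a x \<xi>) \<le> Cf [] * jbr \<xi> ^ (m - 1)" if "x \<in> K" for x \<xi>
    using Cf[of "[]" 1 x \<xi>] that split[of x \<xi>] by (simp add: nxi_def)
  also have "Cf [] * jbr \<xi> ^ (m - 1) \<le> max (Cf []) 0 * jbr \<xi> ^ (m - 1)" for \<xi>
    by (intro mult_right_mono) (auto simp: zero_le_power[OF less_imp_le[OF jbr_pos]])
  finally show ?thesis using that[of "max (Cf []) 0"] by auto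
qed


lemma ell_bound:
  obtains Ce where "Ce > 0" "\<And>x \<xi>. x \<in> K \<Longrightarrow> jbr \<xi> ^ m * jbr \<xi> ^ m \<le> Ce * (1 + (ss m a z) (x, \<xi>))"
proof (cases "m = 0")
  case True
  show ?thesis by (rule that[of 1]) (auto simp: True ss_def)
next
  case False
  then have m1: "m \<ge> 1" by simp
  obtain C0 where C0: "C0 > 0" "\<And>x \<xi>. x \<in> K \<Longrightarrow> norm (princ m a x \<xi>) \<ge> (norm \<xi>) ^ m / C0"
    using ell by blast
  obtain A where A: "A \<ge> 0" "\<And>x \<xi>. x \<in> K \<Longrightarrow> norm (symb m a x \<xi> - princ m a x \<xi>) \<le> A * jbr \<xi> ^ (m - 1)"
    using lower_bound by blast
  define T where "T = max 2 (2 ^ (m + 1) * C0 * A)"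
  define C1 where "C1 = T ^ m + 2 ^ (m + 1) * C0 * (1 + cmod z)"
  have T0: "T \<ge> 0" unfolding T_def by simp
  have "0 < 2 ^ (m + 1) * C0 * (1 + cmod z)" using C0(1) by (simp add: add_pos_nonneg)
  then have C1p: "C1 > 0" unfolding C1_def using T0 by (simp add: add_nonneg_pos)
  show ?thesis
  proof (rule that[of "2 * C1\<^sup>2"])
    show "0 < 2 * C1\<^sup>2" using C1p by simp
  next
    fix x and \<xi> :: "real^'n" assume x: "x \<in> K"
    define t where "t = jbr \<xi>"
    define qv where "qv = cmod (symb m a x \<xi> - z)"
    have t1: "t \<ge> 1" unfolding t_def by (rule jbr_ge1)
    have tN: "t\<^sup>2 = 1 + (norm \<xi>)\<^sup>2" unfolding t_def jbr_def by simp
    have qv0: "qv \<ge> 0" unfolding qv_def by simp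
    have "princ m a x \<xi> = (symb m a x \<xi> - z) + z - (symb m a x \<xi> - princ m a x \<xi>)" by simp
    then have "norm (princ m a x \<xi>) = norm ((symb m a x \<xi> - z) + z - (symb m a x \<xi> - princ m a x \<xi>))" by simp
    also have "\<dots> \<le> norm ((symb m a x \<xi> - z) + z) + norm (symb m a x \<xi> - princ m a x \<xi>)"
      by (rule norm_triangle_ineq4)
    also have "norm ((symb m a x \<xi> - z) + z) \<le> qv + cmod z" unfolding qv_def by (rule norm_triangle_ineq)
    then have "norm ((symb m a x \<xi> - z) + z) + norm (symb m a x \<xi> - princ m a x \<xi>) \<le> qv + cmod z + norm (symb m a x \<xi> - princ m a x \<xi>)"
      by simp
    also have "\<dots> \<le> qv + cmod z + A * t ^ (m - 1)" using A(2)[OF x, of \<xi>] t_def by simp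
    finally have pr: "norm (princ m a x \<xi>) \<le> qv + cmod z + A * t ^ (m - 1)" .
    have "t ^ m \<le> T ^ m + 2 ^ (m + 1) * C0 * (1 + cmod z) * (1 + qv)"
      unfolding T_def
      by (rule ell_arith[OF m1 t1 norm_ge_zero tN qv0 norm_ge_zero A(1) C0(1) C0(2)[OF x] pr])
    also have "\<dots> \<le> C1 * (1 + qv)"
      unfolding C1_def using qv0 T0 by (simp add: algebra_simps)
    finally have tm: "t ^ m \<le> C1 * (1 + qv)" .
    have "t ^ m * t ^ m \<le> (C1 * (1 + qv)) * (C1 * (1 + qv))"
      using tm t1 C1p qv0 by (intro mult_mono) auto
    also have "\<dots> \<le> 2 * C1\<^sup>2 * (1 + qv\<^sup>2)"
    proof -
      have "0 \<le> (1 - qv) * (1 - qv)" by simp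
      then have "(1 + qv) * (1 + qv) \<le> 2 * (1 + qv\<^sup>2)"
        by (simp add: power2_eq_square algebra_simps)
      then have "C1\<^sup>2 * ((1 + qv) * (1 + qv)) \<le> C1\<^sup>2 * (2 * (1 + qv\<^sup>2))"
        by (intro mult_left_mono) auto
      then show ?thesis by (simp add: power2_eq_square algebra_simps)
    qed
    finally show "jbr \<xi> ^ m * jbr \<xi> ^ m \<le> 2 * C1\<^sup>2 * (1 + (ss m a z) (x, \<xi>))"
      unfolding t_def qv_def ss_def qq_def by simp
  qed
qed


lemma cs_ineq: "\<bar>Re p * Re q + Im p * Im q\<bar> \<le> cmod p * cmod q"
proof -
  have "Re p * Re q + Im p * Im q = Re (cnj p * q)" by simp
  also have "\<bar>\<dots>\<bar> \<le> cmod (cnj p * q)" by (rule abs_Re_le_cmod)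
  also have "\<dots> = cmod p * cmod q" by (simp add: norm_mult)
  finally show ?thesis .
qed

lemma dss_bound:
  assumes w: "w \<in> U \<times> UNIV"
  shows "\<bar>dir_deriv v (ss m a z) w\<bar> \<le> 2 * cmod (qq m a z w) * cmod (dir_deriv v (qq m a z) w)"
proof -
  have "smooth_on (U \<times> UNIV) (qq m a z)" using cls_smooth[OF U KU cls_qq[where U=U and K=K and m=m and a=a and z=z, OF U Kc KU sm], of 1] by simp
  then have "qq m a z differentiable_on U \<times> UNIV" unfolding smooth_on_def by (metis iter_deriv.simps(1))
  then have "qq m a z differentiable (at w)"
    using w unfolding differentiable_on_eq_differentiable_at[OF V_open[OF U KU]] by blast
  then obtain Q' where Q': "(qq m a z has_derivative Q') (at w)" unfolding differentiable_def by blast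
  have hRe: "((\<lambda>w. Re (qq m a z w)) has_derivative (\<lambda>h. Re (Q' h))) (at w)"
    by (rule bounded_linear.has_derivative[OF bounded_linear_Re Q'])
  have hIm: "((\<lambda>w. Im (qq m a z w)) has_derivative (\<lambda>h. Im (Q' h))) (at w)"
    by (rule bounded_linear.has_derivative[OF bounded_linear_Im Q'])
  have eq: "ss m a z = (\<lambda>w. Re (qq m a z w) * Re (qq m a z w) + Im (qq m a z w) * Im (qq m a z w))"
    by (intro ext, simp only: ss_def cmod_power2, simp only: power2_eq_square)
  have "(ss m a z has_derivative (\<lambda>h. (Re (qq m a z w) * Re (Q' h) + Re (Q' h) * Re (qq m a z w)) +
        (Im (qq m a z w) * Im (Q' h) + Im (Q' h) * Im (qq m a z w)))) (at w)"
    unfolding eq by (intro has_derivative_add has_derivative_mult hRe hIm)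
  then have "dir_deriv v (ss m a z) w = 2 * (Re (qq m a z w) * Re (Q' v) + Im (qq m a z w) * Im (Q' v))"
    by (simp add: dir_deriv_eq algebra_simps)
  moreover have "dir_deriv v (qq m a z) w = Q' v" by (rule dir_deriv_eq[OF Q'])
  ultimately show ?thesis using cs_ineq[of "qq m a z w" "Q' v"] by simp
qed

lemma main_bound:
  "\<forall>l ds. set ds \<subseteq> Dset \<longrightarrow> length ds = n \<longrightarrow> (\<exists>C. \<forall>\<alpha>\<in>{0<..1::real}. \<forall>x\<in>K. \<forall>\<xi>::real^'n.
     \<bar>iter_deriv ds (HH m a z l \<alpha>) (x, \<xi>)\<bar> \<le> C * HH m a z l \<alpha> (x, \<xi>)
       * sqrt ((1 + ss m a z (x, \<xi>)) / (\<alpha> + ss m a z (x, \<xi>))) ^ n * jbr \<xi> powr (- real (nxi ds)))"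
proof (induction n rule: less_induct)
  case (less n)
  show ?case
  proof (intro allI impI)
    fix l :: real and ds :: "((real^'n) \<times> (real^'n)) list"
    assume ds: "set ds \<subseteq> Dset" and len: "length ds = n"
    show "\<exists>C. \<forall>\<alpha>\<in>{0<..1::real}. \<forall>x\<in>K. \<forall>\<xi>::real^'n.
       \<bar>iter_deriv ds (HH m a z l \<alpha>) (x, \<xi>)\<bar> \<le> C * HH m a z l \<alpha> (x, \<xi>)
       * sqrt ((1 + ss m a z (x, \<xi>)) / (\<alpha> + ss m a z (x, \<xi>))) ^ n * jbr \<xi> powr (- real (nxi ds))"
    proof (cases ds rule: rev_cases)
      case Nil
      then show ?thesis using len by (intro exI[of _ 1]) (auto simp: nxi_def HH_def)
    next
      case (snoc vs v)
      have vD: "v \<in> Dset" and vsD: "set vs \<subseteq> Dset" using ds snoc by auto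
      have n: "n = Suc (length vs)" using len snoc by simp
      have "\<forall>b. \<exists>C. set b \<subseteq> Dset \<longrightarrow> length b < n \<longrightarrow> (\<forall>\<alpha>\<in>{0<..1::real}. \<forall>x\<in>K. \<forall>\<xi>::real^'n.
          \<bar>iter_deriv b (HH m a z (l - 1) \<alpha>) (x, \<xi>)\<bar> \<le> C * HH m a z (l - 1) \<alpha> (x, \<xi>)
          * sqrt ((1 + ss m a z (x, \<xi>)) / (\<alpha> + ss m a z (x, \<xi>))) ^ length b * jbr \<xi> powr (- real (nxi b)))"
      proof
        fix b :: "((real^'n) \<times> (real^'n)) list"
        show "\<exists>C. set b \<subseteq> Dset \<longrightarrow> length b < n \<longrightarrow> (\<forall>\<alpha>\<in>{0<..1::real}. \<forall>x\<in>K. \<forall>\<xi>::real^'n.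
          \<bar>iter_deriv b (HH m a z (l - 1) \<alpha>) (x, \<xi>)\<bar> \<le> C * HH m a z (l - 1) \<alpha> (x, \<xi>)
          * sqrt ((1 + ss m a z (x, \<xi>)) / (\<alpha> + ss m a z (x, \<xi>))) ^ length b * jbr \<xi> powr (- real (nxi b)))"
        proof (cases "set b \<subseteq> Dset \<and> length b < n")
          case True
          then show ?thesis using less.IH[of "length b"] by blast
        next
          case False
          then show ?thesis by blast
        qed
      qed
      then have "\<exists>Ca. \<forall>b. set b \<subseteq> Dset \<longrightarrow> length b < n \<longrightarrow> (\<forall>\<alpha>\<in>{0<..1::real}. \<forall>x\<in>K. \<forall>\<xi>::real^'n.
          \<bar>iter_deriv b (HH m a z (l - 1) \<alpha>) (x, \<xi>)\<bar> \<le> Ca b * HH m a z (l - 1) \<alpha> (x, \<xi>)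
          * sqrt ((1 + ss m a z (x, \<xi>)) / (\<alpha> + ss m a z (x, \<xi>))) ^ length b * jbr \<xi> powr (- real (nxi b)))"
        by (rule choice)
      then obtain Ca where Ca: "\<forall>b. set b \<subseteq> Dset \<longrightarrow> length b < n \<longrightarrow> (\<forall>\<alpha>\<in>{0<..1::real}. \<forall>x\<in>K. \<forall>\<xi>::real^'n.
          \<bar>iter_deriv b (HH m a z (l - 1) \<alpha>) (x, \<xi>)\<bar> \<le> Ca b * HH m a z (l - 1) \<alpha> (x, \<xi>)
          * sqrt ((1 + ss m a z (x, \<xi>)) / (\<alpha> + ss m a z (x, \<xi>))) ^ length b * jbr \<xi> powr (- real (nxi b)))"
        by blast
      obtain Cs where Cs: "\<And>ds (\<alpha>::real) x (\<xi>::real^'n). set ds \<subseteq> Dset \<Longrightarrow> \<alpha> \<in> {0<..1} \<Longrightarrow> x \<in> K \<Longrightarrow>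
         norm (iter_deriv ds (ss m a z) (x, \<xi>)) \<le> Cs ds * (jbr (snd (x, \<xi>)) ^ m * jbr (snd (x, \<xi>)) ^ m) * 1 ^ length ds * jbr \<xi> powr (- real (nxi ds))"
        by (rule cls_bound[OF U KU cls_ss'[where U=U and K=K and m=m and a=a and z=z, OF U Kc KU sm]]) blast+
      obtain Cq where Cq: "\<And>ds (\<alpha>::real) x (\<xi>::real^'n). set ds \<subseteq> Dset \<Longrightarrow> \<alpha> \<in> {0<..1} \<Longrightarrow> x \<in> K \<Longrightarrow>
         norm (iter_deriv ds (qq m a z) (x, \<xi>)) \<le> Cq ds * jbr (snd (x, \<xi>)) ^ m * 1 ^ length ds * jbr \<xi> powr (- real (nxi ds))"
        by (rule cls_bound[OF U KU cls_qq[where U=U and K=K and m=m and a=a and z=z, OF U Kc KU sm]]) blast+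
      obtain Ce where Ce: "Ce > 0" "\<And>x \<xi>. x \<in> K \<Longrightarrow> jbr \<xi> ^ m * jbr \<xi> ^ m \<le> Ce * (1 + ss m a z (x, \<xi>))"
        using ell_bound by blast
      define KK where "KK = (\<lambda>(b::((real^'n) \<times> (real^'n)) list, c::((real^'n) \<times> (real^'n)) list).
          \<bar>l\<bar> * \<bar>Ca b\<bar> * (2 * \<bar>Cq [v]\<bar> * sqrt Ce + \<bar>Cs (c @ [v])\<bar> * Ce))"
      show ?thesis
      proof (rule exI[of _ "\<Sum>y\<leftarrow>splits vs. KK y"], intro ballI allI)
        fix \<alpha> :: real and x and \<xi> :: "real^'n"
        assume \<alpha>: "\<alpha> \<in> {0<..1}" and x: "x \<in> K"
        define w where "w = (x, \<xi>)"
        have wV: "w \<in> U \<times> UNIV" using x KU w_def by auto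
        have \<alpha>0: "0 < \<alpha>" and \<alpha>1: "\<alpha> \<le> 1" using \<alpha> by auto
        define S where "S = ss m a z w"
        define h where "h = HH m a z l \<alpha> w"
        define R where "R = sqrt ((1 + S) / (\<alpha> + S))"
        define J where "J = jbr \<xi>"
        define X where "X = h * R ^ n * J powr (- real (nxi ds))"
        have S0: "0 \<le> S" unfolding S_def by (simp add: ss_def)
        have h0: "0 \<le> h" unfolding h_def HH_def by simp
        have J0: "0 < J" unfolding J_def by (rule jbr_pos)
        have X0: "0 \<le> X" unfolding X_def R_def using h0 S0 \<alpha>0
          by (intro mult_nonneg_nonneg zero_le_power) auto
        have h1: "HH m a z (l - 1) \<alpha> w = h * \<alpha> / (\<alpha> + S)"
        proof -
          have pos: "0 < 1 + S / \<alpha>" using \<alpha>0 S0 by (simp add: add_pos_nonneg)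
          have "HH m a z (l - 1) \<alpha> w = (1 + S / \<alpha>) powr l / (1 + S / \<alpha>)"
            unfolding HH_def S_def using pos by (simp add: powr_diff S_def)
          also have "\<dots> = h * \<alpha> / (\<alpha> + S)" unfolding h_def HH_def S_def[symmetric]
            using \<alpha>0 S0 by (simp add: field_simps)
          finally show ?thesis .
        qed
        have sH: "smooth_on (U \<times> UNIV) (HH m a z (l - 1) \<alpha>)" by (rule HH_smooth[where U=U and K=K and m=m and a=a and z=z, OF U Kc KU sm \<alpha>0])
        have sS: "smooth_on (U \<times> UNIV) (dir_deriv v (ss m a z))"
          using smooth_iter_deriv[OF ss_smooth[where U=U and K=K and m=m and a=a and z=z, OF U Kc KU sm], of "[v]"] by simp
        have sP: "smooth_on (U \<times> UNIV) (\<lambda>w. HH m a z (l - 1) \<alpha> w * dir_deriv v (ss m a z) w)"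
          by (rule smooth_mult[OF V_open[OF U KU] sH sS])
        have "iter_deriv ds (HH m a z l \<alpha>) w = iter_deriv vs (\<lambda>w. (l / \<alpha>) * (HH m a z (l - 1) \<alpha> w * dir_deriv v (ss m a z) w)) w"
          unfolding snoc iter_deriv_append
          by (rule iter_deriv_cong[OF V_open[OF U KU] _ wV]) (simp add: HH_deriv[where U=U and K=K and m=m and a=a and z=z, OF U Kc KU sm \<alpha>0])
        also have "\<dots> = (l / \<alpha>) * iter_deriv vs (\<lambda>w. HH m a z (l - 1) \<alpha> w * dir_deriv v (ss m a z) w) w"
          by (rule iter_deriv_linear[OF bounded_linear_mult_right V_open[OF U KU] _ wV])
             (use sP in \<open>auto simp: smooth_on_def\<close>)
        also have "iter_deriv vs (\<lambda>w. HH m a z (l - 1) \<alpha> w * dir_deriv v (ss m a z) w) w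
            = (\<Sum>(b, c)\<leftarrow>splits vs. iter_deriv b (HH m a z (l - 1) \<alpha>) w * iter_deriv c (dir_deriv v (ss m a z)) w)"
          by (rule leibniz[OF V_open[OF U KU] _ _ wV]) (use sH sS in \<open>auto simp: smooth_on_def\<close>)
        finally have expand: "iter_deriv ds (HH m a z l \<alpha>) w = (\<Sum>y\<leftarrow>splits vs. (case y of (b, c) \<Rightarrow> (l / \<alpha>) * (iter_deriv b (HH m a z (l - 1) \<alpha>) w * iter_deriv (c @ [v]) (ss m a z) w)))"
          by (simp add: sum_list_const_mult[symmetric] iter_deriv_append case_prod_beta')
        have tb: "norm (case y of (b, c) \<Rightarrow> (l / \<alpha>) * (iter_deriv b (HH m a z (l - 1) \<alpha>) w * iter_deriv (c @ [v]) (ss m a z) w)) \<le> KK y * X"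
          if y: "y \<in> set (splits vs)" for y
        proof -
          obtain b c where yb: "y = (b, c)" by fastforce
          have sp: "length b + length c = length vs" "set b \<subseteq> Dset" "set c \<subseteq> Dset" "nxi b + nxi c = nxi vs"
            using splits_props[of b c vs "\<lambda>v. fst v = 0"] y yb vsD by (auto simp: nxi_def)
          have Ab: "\<bar>iter_deriv b (HH m a z (l - 1) \<alpha>) w\<bar> \<le> Ca b * HH m a z (l - 1) \<alpha> w * R ^ length b * J powr (- real (nxi b))"
            using Ca sp(1,2) n \<alpha> x unfolding w_def R_def S_def J_def by auto
          have nds: "nxi ds = nxi vs + nxi [v]" unfolding snoc by (simp add: nxi_def)
          show ?thesis
          proof (cases "c = []")
            case True
            then have bvs: "b = vs" using splits_nil y yb by blast
            have Sb: "\<bar>iter_deriv ([] @ [v]) (ss m a z) w\<bar> \<le> 2 * sqrt S * cmod (iter_deriv [v] (qq m a z) w)"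
              using dss_bound[OF wV, of v] unfolding S_def by (simp add: ss_def)
            have Qb: "cmod (iter_deriv [v] (qq m a z) w) \<le> Cq [v] * J ^ m * J powr (- real (nxi [v]))"
              using Cq[of "[v]" \<alpha> x \<xi>] vD \<alpha> x unfolding w_def J_def by simp
            have "\<bar>(l / \<alpha>) * (iter_deriv b (HH m a z (l - 1) \<alpha>) w * iter_deriv ([] @ [v]) (ss m a z) w)\<bar>
                \<le> \<bar>l\<bar> * \<bar>Ca b\<bar> * (2 * \<bar>Cq [v]\<bar> * sqrt Ce) * h * R ^ (length b + 1) * J powr (- real (nxi b + nxi [v]))"
              by (rule core_nil[OF \<alpha>0 S0 h0 h1 R_def J0 _ Ce(1) _ refl Ab Sb Qb])
                 (use Ce(2)[OF x, of \<xi>] zero_le_power[OF less_imp_le[OF jbr_pos]] in \<open>auto simp: J_def S_def w_def\<close>)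
            also have "\<dots> = \<bar>l\<bar> * \<bar>Ca b\<bar> * (2 * \<bar>Cq [v]\<bar> * sqrt Ce) * X"
              unfolding X_def using bvs n nds by simp
            also have "\<dots> \<le> KK y * X" unfolding yb KK_def
              using X0 Ce(1) by (intro mult_right_mono) (auto intro!: mult_left_mono)
            finally show ?thesis using True yb by simp
          next
            case False
            have Sb: "\<bar>iter_deriv (c @ [v]) (ss m a z) w\<bar> \<le> Cs (c @ [v]) * (J ^ m * J ^ m) * J powr (- real (nxi (c @ [v])))"
              using Cs[of "c @ [v]" \<alpha> x \<xi>] sp(3) vD \<alpha> x unfolding w_def J_def by simp
            have kb: "2 \<le> length (c @ [v])" using False by (cases c) auto
            have "\<bar>(l / \<alpha>) * (iter_deriv b (HH m a z (l - 1) \<alpha>) w * iter_deriv (c @ [v]) (ss m a z) w)\<bar>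
                \<le> \<bar>l\<bar> * \<bar>Ca b\<bar> * (\<bar>Cs (c @ [v])\<bar> * Ce) * h * R ^ (length b + length (c @ [v])) * J powr (- real (nxi b + nxi (c @ [v])))"
              by (rule core_cons[OF \<alpha>0 \<alpha>1 S0 h0 h1 R_def J0 _ Ce(1) _ kb Ab Sb])
                 (use Ce(2)[OF x, of \<xi>] zero_le_power[OF less_imp_le[OF jbr_pos]] in \<open>auto simp: J_def S_def w_def\<close>)
            also have "\<dots> = \<bar>l\<bar> * \<bar>Ca b\<bar> * (\<bar>Cs (c @ [v])\<bar> * Ce) * X"
            proof -
              have e1: "length b + length (c @ [v]) = n" using sp(1) n by simp
              have e2: "nxi b + nxi (c @ [v]) = nxi ds" using sp(4) nds by (simp add: nxi_props)
              show ?thesis unfolding X_def e1 e2 by (simp add: mult.assoc)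
            qed
            also have "\<dots> \<le> KK y * X" unfolding yb KK_def
              using X0 Ce(1) by (intro mult_right_mono) (auto intro!: mult_left_mono)
            finally show ?thesis using yb by simp
          qed
        qed
        have "\<bar>iter_deriv ds (HH m a z l \<alpha>) w\<bar> \<le> (\<Sum>y\<leftarrow>splits vs. KK y * X)"
          unfolding expand using norm_sum_list_le[of "splits vs", OF tb] by simp
        also have "\<dots> = (\<Sum>y\<leftarrow>splits vs. KK y) * X" by (rule sum_list_mult_const')
        finally show "\<bar>iter_deriv ds (HH m a z l \<alpha>) (x, \<xi>)\<bar> \<le> (\<Sum>y\<leftarrow>splits vs. KK y) * HH m a z l \<alpha> (x, \<xi>)
          * sqrt ((1 + ss m a z (x, \<xi>)) / (\<alpha> + ss m a z (x, \<xi>))) ^ n * jbr \<xi> powr (- real (nxi ds))"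
          unfolding X_def h_def R_def S_def J_def w_def by (simp add: mult.assoc)
      qed
    qed
  qed
qed

end


lemma sqrt_pow_eq:
  fixes y :: real
  assumes y: "0 < y"
  shows "sqrt y ^ n = ((1 / y) powr (1/2)) powr (- real n)"
proof -
  have "((1 / y) powr (1/2)) powr (- real n) = (1 / y) powr (- real n / 2)"
    by (simp add: powr_powr)
  also have "\<dots> = y powr (real n / 2)"
    using y by (simp add: powr_divide powr_minus_divide)
  also have "\<dots> = (y powr (1/2)) powr real n" by (simp add: powr_powr)
  also have "\<dots> = (y powr (1/2)) ^ n" using y by (simp add: powr_realpow)
  also have "\<dots> = sqrt y ^ n" using y by (simp add: powr_half_sqrt)
  finally show ?thesis by simp
qed

theorem proposition4p1:
  fixes U :: "(real^'n) set"
    and m :: nat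
    and a :: "('n \<Rightarrow> nat) \<Rightarrow> real^'n \<Rightarrow> complex"
    and z :: complex
  assumes U_open: "open U"
    and smooth: "\<And>\<beta>. mi_len \<beta> \<le> m \<Longrightarrow> smooth_on U (a \<beta>)"
    and elliptic: "\<And>K. compact K \<Longrightarrow> K \<subseteq> U \<Longrightarrow>
        \<exists>C>0. \<forall>x\<in>K. \<forall>\<xi>. norm (princ m a x \<xi>) \<ge> (norm \<xi>) ^ m / C"
  shows "\<exists>\<alpha>0>0. \<forall>K l (as :: 'n list) (bs :: 'n list). compact K \<longrightarrow> K \<subseteq> U \<longrightarrow>
     (\<exists>C. \<forall>\<alpha>\<in>{0<..\<alpha>0}. \<forall>x\<in>K. \<forall>\<xi>.
        let s = (\<lambda>(y, \<eta>). (cmod (symb m a y \<eta> - z))\<^sup>2);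
            \<Lambda> = ((\<alpha> + s (x, \<xi>)) / (1 + s (x, \<xi>))) powr (1/2)
        in \<bar>iter_deriv (map dx as @ map dxi bs) (\<lambda>w. (1 + s w / \<alpha>) powr l) (x, \<xi>)\<bar>
           \<le> C * (1 + s (x, \<xi>) / \<alpha>) powr l * \<Lambda> powr (- real (length as + length bs))
               * jbr \<xi> powr (- real (length bs)))"
proof (rule exI[of _ 1], intro conjI allI impI)
  show "(0::real) < 1" by simp
next
  fix K l and as bs :: "'n list"
  assume Kc: "compact K" and KU: "K \<subseteq> U"
  define ds where "ds = map dx as @ map dxi bs"
  have dsD: "set ds \<subseteq> Dset" unfolding ds_def Dset_def by auto
  have nds: "nxi ds = length bs"
  proof -
    have "fst (dx i) \<noteq> 0" for i :: 'n by (simp add: dx_def axis_eq_0_iff)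
    then have "filter (\<lambda>v. fst v = 0) (map dx as) = []" by (induction as) auto
    moreover have "filter (\<lambda>v. fst v = 0) (map dxi bs) = map dxi bs" by (induction bs) (auto simp: dxi_def)
    ultimately show ?thesis unfolding nxi_def ds_def by simp
  qed
  have lds: "length ds = length as + length bs" unfolding ds_def by simp
  have ellK: "\<exists>C>0. \<forall>x\<in>K. \<forall>\<xi>. norm (princ m a x \<xi>) \<ge> (norm \<xi>) ^ m / C"
    using elliptic[OF Kc KU] .
  obtain C where C: "\<forall>\<alpha>\<in>{0<..1::real}. \<forall>x\<in>K. \<forall>\<xi>::real^'n.
     \<bar>iter_deriv ds (HH m a z l \<alpha>) (x, \<xi>)\<bar> \<le> C * HH m a z l \<alpha> (x, \<xi>)
       * sqrt ((1 + ss m a z (x, \<xi>)) / (\<alpha> + ss m a z (x, \<xi>))) ^ length ds * jbr \<xi> powr (- real (nxi ds))"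
  proof -
    have triv: "\<And>\<beta>::'n\<Rightarrow>nat. mi_len \<beta> \<le> m \<Longrightarrow> mi_len \<beta> \<le> m" by simp
    show ?thesis
      using main_bound[where U=U and K=K and m=m and a=a and z=z, OF U_open Kc KU smooth ellK, rule_format, OF triv dsD refl] that
      by blast
  qed
  show "\<exists>C. \<forall>\<alpha>\<in>{0<..1}. \<forall>x\<in>K. \<forall>\<xi>.
        let s = (\<lambda>(y, \<eta>). (cmod (symb m a y \<eta> - z))\<^sup>2);
            \<Lambda> = ((\<alpha> + s (x, \<xi>)) / (1 + s (x, \<xi>))) powr (1/2)
        in \<bar>iter_deriv (map dx as @ map dxi bs) (\<lambda>w. (1 + s w / \<alpha>) powr l) (x, \<xi>)\<bar>
           \<le> C * (1 + s (x, \<xi>) / \<alpha>) powr l * \<Lambda> powr (- real (length as + length bs))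
               * jbr \<xi> powr (- real (length bs))"
  proof (rule exI[of _ C], intro ballI allI)
    fix \<alpha> :: real and x and \<xi> :: "real^'n"
    assume \<alpha>: "\<alpha> \<in> {0<..1}" and x: "x \<in> K"
    have fe: "(\<lambda>w. (1 + (\<lambda>(y, \<eta>). (cmod (symb m a y \<eta> - z))\<^sup>2) w / \<alpha>) powr l) = HH m a z l \<alpha>"
      by (intro ext) (simp add: HH_def ss_def qq_def case_prod_beta')
    have se: "(\<lambda>(y, \<eta>). (cmod (symb m a y \<eta> - z))\<^sup>2) (x, \<xi>) = ss m a z (x, \<xi>)"
      by (simp add: ss_def qq_def)
    define S where "S = ss m a z (x, \<xi>)"
    have S0: "0 \<le> S" unfolding S_def by (simp add: ss_def)
    have y: "0 < (1 + S) / (\<alpha> + S)" using S0 \<alpha> by simp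
    have eqp: "sqrt ((1 + S) / (\<alpha> + S)) ^ length ds = (((\<alpha> + S) / (1 + S)) powr (1/2)) powr (- real (length as + length bs))"
      using sqrt_pow_eq[OF y, of "length ds"] lds by simp
    show "let s = (\<lambda>(y, \<eta>). (cmod (symb m a y \<eta> - z))\<^sup>2);
            \<Lambda> = ((\<alpha> + s (x, \<xi>)) / (1 + s (x, \<xi>))) powr (1/2)
        in \<bar>iter_deriv (map dx as @ map dxi bs) (\<lambda>w. (1 + s w / \<alpha>) powr l) (x, \<xi>)\<bar>
           \<le> C * (1 + s (x, \<xi>) / \<alpha>) powr l * \<Lambda> powr (- real (length as + length bs))
               * jbr \<xi> powr (- real (length bs))"
    proof -
      have b: "\<bar>iter_deriv ds (HH m a z l \<alpha>) (x, \<xi>)\<bar> \<le> C * HH m a z l \<alpha> (x, \<xi>)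
       * sqrt ((1 + S) / (\<alpha> + S)) ^ length ds * jbr \<xi> powr (- real (nxi ds))"
        using C \<alpha> x unfolding S_def by blast
      show ?thesis unfolding Let_def fe se S_def[symmetric] ds_def[symmetric]
        using b unfolding eqp nds by (simp add: HH_def S_def)
    qed
  qed
qed

end
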